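(* Let $q=p^m$ with $p$ prime and let $(k,q)$ be a semiprimitive pair. Then $\Gamma(k,q)$ is Ramanujan if and only if either $k=2$ (the classical Paley graph, $q\equiv1\pmod4$), or $m$ is even and $(k,p,m)$ satisfies one of: (a) $k=3$, $p=2$, $m\ge4$; (b) $k=3$, $p\ne2$, $p\equiv2\pmod3$, $m\ge2$; (c) $k=4$, $p=3$, $m\ge4$; (d) $k=4$, $p\ne3$, $p\equiv3\pmod4$, $m\ge2$; (e) $k=5$, $p=2$, $m\ge8$, $4\mid m$; (f) $k=5$, $p\ne2$, $p\equiv2,3\pmod5$, $m\ge4$, $4\mid m$; (g) $k=5$, $p\equiv4\pmod5$, $m\ge2$. Moreover, $\bar\Gamma(k,q)$ is Ramanujan for every semiprimitive pair $(k,q)$.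
   Context: Let $p$ be prime, $q=p^m$, $k\mid q-1$, $R_k=\{x^k:x\in\mathbb F_q^*\}$. $\Gamma(k,q)$ is the Cayley graph on $\mathbb F_q$ with $u\to v$ an edge iff $v-u\in R_k$; $\bar\Gamma(k,q)$ is the Cayley graph on $\mathbb F_q$ with connection set $\mathbb F_q^*\setminus R_k$. A pair $(k,q)$ is a semiprimitive pair if either $k=2$ and $q\equiv1\pmod4$, or $k>2$, $k\mid p^t+1$ for some $t\mid\frac m2$, and $k\ne p^{m/2}+1$. A connected $N$-regular graph $\Gamma$ is Ramanujan if $\max\{|\lambda|:\lambda\text{ eigenvalue of }\Gamma,\ |\lambda|\ne N\}\le 2\sqrt{N-1}$. *)

theory Defs
  imports Complex_Main "HOL-Computational_Algebra.Primes"
begin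

definition kth_powers :: "nat \<Rightarrow> 'a::{finite,field} set" where
  "kth_powers k = {x ^ k | x. x \<noteq> 0}"

definition gpaley :: "nat \<Rightarrow> 'a::{finite,field} \<Rightarrow> 'a \<Rightarrow> bool" where
  "gpaley k u v \<longleftrightarrow> v - u \<in> kth_powers k"

definition gpaley_bar :: "nat \<Rightarrow> 'a::{finite,field} \<Rightarrow> 'a \<Rightarrow> bool" where
  "gpaley_bar k u v \<longleftrightarrow> v - u \<noteq> 0 \<and> v - u \<notin> kth_powers k"

definition adj_eigenvalue :: "('a::finite \<Rightarrow> 'a \<Rightarrow> bool) \<Rightarrow> complex \<Rightarrow> bool" where
  "adj_eigenvalue E mu \<longleftrightarrow>
     (\<exists>v :: 'a \<Rightarrow> complex. v \<noteq> (\<lambda>_. 0) \<and>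
        (\<forall>u. (\<Sum>w\<in>{w. E u w}. v w) = mu * v u))"

definition connected_graph :: "('a \<Rightarrow> 'a \<Rightarrow> bool) \<Rightarrow> bool" where
  "connected_graph E \<longleftrightarrow> (\<forall>u v. E\<^sup>*\<^sup>* u v)"

definition regular_graph :: "('a::finite \<Rightarrow> 'a \<Rightarrow> bool) \<Rightarrow> nat \<Rightarrow> bool" where
  "regular_graph E N \<longleftrightarrow> (\<forall>u. card {w. E u w} = N)"

definition ramanujan :: "('a::finite \<Rightarrow> 'a \<Rightarrow> bool) \<Rightarrow> bool" where
  "ramanujan E \<longleftrightarrow> connected_graph E \<and>
     (\<exists>N. regular_graph E N \<and>
        (\<forall>mu. adj_eigenvalue E mu \<and> cmod mu \<noteq> real N \<longrightarrow> cmod mu \<le> 2 * sqrt (real N - 1)))"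

definition semiprimitive_pair :: "nat \<Rightarrow> nat \<Rightarrow> nat \<Rightarrow> bool" where
  "semiprimitive_pair k p m \<longleftrightarrow>
     (k = 2 \<and> (p ^ m) mod 4 = 1) \<or>
     (k > 2 \<and> even m \<and> (\<exists>t. t > 0 \<and> t dvd (m div 2) \<and> k dvd p ^ t + 1) \<and> k \<noteq> p ^ (m div 2) + 1)"

end

theory Submission
  imports Defs "HOL-Algebra.Multiplicative_Group" "HOL-Computational_Algebra.Polynomial"
begin


lemma nat_pow_minus1_dvd: "(a::nat) - 1 dvd a ^ r - 1"
proof (induction r)
  case 0 then show ?case by simp
next
  case (Suc r)
  show ?case
  proof (cases "a = 0")
    case True then show ?thesis by simp
  next
    case False
    have "a ^ Suc r - 1 = a * (a ^ r - 1) + (a - 1)"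
      using False by (simp add: algebra_simps diff_mult_distrib2)
    then show ?thesis using Suc by simp
  qed
qed

definition ring_of_type :: "'a::field ring" where
  "ring_of_type = \<lparr> carrier = UNIV, monoid.mult = (\<lambda>x y. x * y), one = 1, ring.zero = 0, add = (\<lambda>x y. x + y) \<rparr>"

lemma field_ring_of_type: "field (ring_of_type :: 'a::field ring)"
proof -
  have "\<exists>y. x + y = 0" for x :: 'a
    using add.right_inverse by blast
  moreover have "x \<noteq> 0 \<Longrightarrow> \<exists>y. x * y = 1" for x :: 'a
    by (rule exI[of _ "inverse x"]) auto
  ultimately show ?thesis
    unfolding ring_of_type_def using add.right_inverse
    by unfold_locales (auto simp:algebra_simps Units_def)
qed

lemma exists_generator:
  "\<exists>g::'a::{finite,field}. g \<noteq> 0 \<and> (\<forall>x. x \<noteq> 0 \<longrightarrow> (\<exists>i. x = g ^ i))"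
proof -
  interpret F: field "ring_of_type :: 'a ring" by (rule field_ring_of_type)
  have "finite (carrier (ring_of_type :: 'a ring))" by simp
  from F.finite_field_mult_group_has_gen[OF this]
  obtain a where a: "a \<in> carrier (mult_of (ring_of_type :: 'a ring))"
    and A: "carrier (mult_of (ring_of_type :: 'a ring)) = {a [^]\<^bsub>ring_of_type\<^esub> i | i::nat. i \<in> UNIV}"
    by blast
  have pw: "a [^]\<^bsub>(ring_of_type :: 'a ring)\<^esub> (i::nat) = a ^ i" for i
    by (induction i) (auto simp: ring_of_type_def)
  have car: "carrier (mult_of (ring_of_type :: 'a ring)) = UNIV - {0}"
    by (auto simp: ring_of_type_def)
  show ?thesis
    using a A car pw by (intro exI[of _ a]) auto
qed

lemma finite_field_pow_card_minus1:
  fixes x :: "'a::{finite,field}"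
  assumes "x \<noteq> 0"
  shows "x ^ (card (UNIV :: 'a set) - 1) = 1"
proof -
  have "x * (\<Prod>y\<in>UNIV-{0}. x * y) = x * x ^ (card (UNIV :: 'a set) - 1) * \<Prod>(UNIV-{0})"
    by (simp add: prod.distrib mult_ac)
  moreover have "(\<Prod>y\<in>UNIV-{0}. x * y) = (\<Prod>y\<in>UNIV-{0}. y)"
    by (rule prod.reindex_bij_witness[of _ "\<lambda>y. y / x" "\<lambda>y. x * y"]) (use assms in auto)
  moreover have "\<Prod>(UNIV-{0::'a}) \<noteq> 0" by simp
  ultimately show ?thesis using assms by simp
qed

lemma finite_field_card_zero:
  "of_nat (card (UNIV :: 'a::{finite,field} set)) = (0::'a)"
proof -
  have "(\<Sum>y\<in>UNIV. (1::'a) + y) = (\<Sum>y\<in>UNIV. y)"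
    by (rule sum.reindex_bij_witness[of _ "\<lambda>y. y - 1" "\<lambda>y. 1 + y"]) auto
  then show ?thesis by (simp add: sum.distrib)
qed



locale ff =
  fixes p m :: nat and g :: "'a::{finite,field}"
  assumes prime_p: "prime p" and m_pos: "m > 0"
    and card_q: "card (UNIV :: 'a set) = p ^ m"
    and g_nz: "g \<noteq> 0" and g_gen: "\<And>x. x \<noteq> 0 \<Longrightarrow> \<exists>i. x = g ^ i"
begin

lemma p_ge2: "p \<ge> 2" using prime_p prime_ge_2_nat by blast

lemma q_ge2: "p ^ m \<ge> 2"
proof -
  have "p ^ 1 \<le> p ^ m" using m_pos p_ge2 by (intro power_increasing) auto
  then show ?thesis using p_ge2 by simp
qed

lemma pow_n: "x \<noteq> 0 \<Longrightarrow> x ^ (p ^ m - 1) = (1::'a)"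
  using finite_field_pow_card_minus1[of x] card_q by simp

lemma g_pow_mod: "g ^ i = g ^ (i mod (p ^ m - 1))"
proof -
  have "g ^ i = g ^ ((p^m-1) * (i div (p^m-1)) + i mod (p^m-1))" by simp
  also have "\<dots> = g ^ (i mod (p ^ m - 1))"
    by (simp only: power_add power_mult pow_n[OF g_nz]) simp
  finally show ?thesis .
qed

lemma g_inj: "inj_on (\<lambda>i. g ^ i) {..<p ^ m - 1}"
proof -
  have img: "(\<lambda>i. g ^ i) ` {..<p ^ m - 1} = UNIV - {0}"
  proof
    show "(\<lambda>i. g ^ i) ` {..<p ^ m - 1} \<subseteq> UNIV - {0}" using g_nz by auto
    show "UNIV - {0} \<subseteq> (\<lambda>i. g ^ i) ` {..<p ^ m - 1}"
    proof
      fix x :: 'a assume "x \<in> UNIV - {0}"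
      then obtain i where "x = g ^ i" using g_gen by auto
      then have "x = g ^ (i mod (p^m-1))" using g_pow_mod by simp
      moreover have "i mod (p^m-1) < p^m - 1" using q_ge2 by simp
      ultimately show "x \<in> (\<lambda>i. g ^ i) ` {..<p ^ m - 1}" by blast
    qed
  qed
  have "card (UNIV - {0::'a}) = p ^ m - 1" using card_q by simp
  then show ?thesis using img by (intro eq_card_imp_inj_on) auto
qed

lemma g_pow_eq_iff: "g ^ a = g ^ b \<longleftrightarrow> a mod (p^m-1) = b mod (p^m-1)"
proof
  assume "g ^ a = g ^ b"
  then have "g ^ (a mod (p^m-1)) = g ^ (b mod (p^m-1))" using g_pow_mod by metis
  moreover have "a mod (p^m-1) < p^m-1" "b mod (p^m-1) < p^m-1" using q_ge2 by auto
  ultimately show "a mod (p^m-1) = b mod (p^m-1)" using g_inj by (auto dest: inj_onD)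
next
  assume "a mod (p^m-1) = b mod (p^m-1)"
  then show "g ^ a = g ^ b" using g_pow_mod by metis
qed

lemma g_pow_eq_1_iff: "g ^ a = 1 \<longleftrightarrow> (p^m-1) dvd a"
  using g_pow_eq_iff[of a 0] by (simp add: dvd_eq_mod_eq_0)

lemma char_p: "CHAR('a) = p"
proof -
  have fin: "finite (UNIV :: 'a set)" by simp
  have "CHAR('a) > 0" using finite_imp_CHAR_pos[OF fin] .
  then have pc: "prime CHAR('a)" using prime_CHAR_semidom by blast
  have "of_nat (p ^ m) = (0::'a)" using finite_field_card_zero[where 'a='a] card_q by simp
  then have "CHAR('a) dvd p ^ m" using of_nat_eq_0_iff_char_dvd by blast
  then have "CHAR('a) dvd p" using pc prime_dvd_power by blast
  then show ?thesis using pc prime_p by (simp add: primes_dvd_imp_eq)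
qed

lemma frob_add: "(x + y :: 'a) ^ (p ^ d) = x ^ (p ^ d) + y ^ (p ^ d)"
  using freshmans_dream'[of "p ^ d" d x y] char_p prime_p by simp

lemma frob_sum: "(\<Sum>i\<in>A. f i :: 'a) ^ (p ^ d) = (\<Sum>i\<in>A. f i ^ (p ^ d))"
  using p_ge2 by (induction A rule: infinite_finite_induct) (auto simp: frob_add)

lemma frob_neg: "(- x :: 'a) ^ (p ^ d) = - (x ^ (p ^ d))"
proof -
  have "(x + - x) ^ (p ^ d) = x ^ (p ^ d) + (- x) ^ (p ^ d)" by (rule frob_add)
  moreover have "(0::'a) ^ (p ^ d) = 0" using p_ge2 by simp
  ultimately show ?thesis by (simp add: eq_neg_iff_add_eq_0 add.commute)
qed

lemma frob_diff: "(x - y :: 'a) ^ (p ^ d) = x ^ (p ^ d) - y ^ (p ^ d)"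
  using frob_add[of x "-y" d] frob_neg[of y d] by simp

lemma frob_of_nat: "(of_nat j :: 'a) ^ p = of_nat j"
proof (induction j)
  case 0 then show ?case using p_ge2 by simp
next
  case (Suc j)
  have "(of_nat j + 1 :: 'a) ^ (p ^ 1) = of_nat j ^ (p ^ 1) + 1 ^ (p ^ 1)" by (rule frob_add)
  then show ?case using Suc by (simp add: add.commute)
qed

definition K :: "nat \<Rightarrow> 'a set" where "K d = {x. x ^ (p ^ d) = x}"

lemma K_0: "0 \<in> K d" and K_1: "1 \<in> K d" using p_ge2 by (auto simp: K_def)
lemma K_add: "x \<in> K d \<Longrightarrow> y \<in> K d \<Longrightarrow> x + y \<in> K d" by (simp add: K_def frob_add)
lemma K_mult: "x \<in> K d \<Longrightarrow> y \<in> K d \<Longrightarrow> x * y \<in> K d" by (simp add: K_def power_mult_distrib)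
lemma K_neg: "x \<in> K d \<Longrightarrow> - x \<in> K d" by (simp add: K_def frob_neg)
lemma K_diff: "x \<in> K d \<Longrightarrow> y \<in> K d \<Longrightarrow> x - y \<in> K d" by (simp add: K_def frob_diff)
lemma K_inverse: "x \<in> K d \<Longrightarrow> inverse x \<in> K d" by (simp add: K_def power_inverse)
lemma K_divide: "x \<in> K d \<Longrightarrow> y \<in> K d \<Longrightarrow> x / y \<in> K d"
  by (simp add: divide_inverse K_mult K_inverse)

lemma K_pow: "x \<in> K d \<Longrightarrow> x ^ (p ^ d) = x" by (simp add: K_def)

lemma K_top: "K m = UNIV"
proof -
  have "x ^ (p ^ m) = x" for x :: 'a
  proof (cases "x = 0")
    case False
    have "x ^ (p ^ m) = x * x ^ (p ^ m - 1)"
      using q_ge2 by (metis Suc_diff_1 less_le_trans pos2 power_Suc)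
    then show ?thesis using pow_n[OF False] by simp
  qed (use m_pos p_ge2 in simp)
  then show ?thesis by (auto simp: K_def)
qed

end



context ff
begin

lemma pd_dvd: "d dvd m \<Longrightarrow> p ^ d - 1 dvd p ^ m - 1"
proof -
  assume "d dvd m" then obtain r where "m = d * r" by blast
  then show ?thesis using nat_pow_minus1_dvd[of "p ^ d" r] by (simp add: power_mult)
qed

lemma pd_ge2: "d > 0 \<Longrightarrow> p ^ d \<ge> 2"
proof -
  assume "d > 0"
  then have "p ^ 1 \<le> p ^ d" using p_ge2 by (intro power_increasing) auto
  then show ?thesis using p_ge2 by simp
qed

lemma K_nz_iff:
  assumes "d dvd m" "d > 0" "x \<noteq> 0"
  shows "x \<in> K d \<longleftrightarrow> (\<exists>j. x = g ^ (((p^m-1) div (p^d-1)) * j))"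
proof -
  define w where "w = (p^m-1) div (p^d-1)"
  have nw: "p^m - 1 = w * (p^d - 1)" using pd_dvd[OF assms(1)] by (simp add: w_def)
  have L1: "p^d - 1 > 0" using pd_ge2[OF assms(2)] by simp
  obtain i where x: "x = g ^ i" using g_gen assms(3) by blast
  have ge: "i \<le> i * p ^ d" using p_ge2 by simp
  have "x \<in> K d \<longleftrightarrow> g ^ (i * p ^ d) = g ^ i" by (simp add: K_def x power_mult)
  also have "\<dots> \<longleftrightarrow> (p^m-1) dvd (i * p ^ d - i)"
    using g_pow_eq_iff mod_eq_dvd_iff_nat[OF ge] by metis
  also have "i * p ^ d - i = i * (p^d - 1)" by (simp add: diff_mult_distrib2)
  also have "(p^m-1) dvd i * (p^d - 1) \<longleftrightarrow> w dvd i"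
    unfolding nw using L1 by (simp add: dvd_times_right_cancel_iff)
  also have "\<dots> \<longleftrightarrow> (\<exists>j. x = g ^ (w * j))"
  proof
    assume "w dvd i" then show "\<exists>j. x = g ^ (w * j)" using x by (auto simp: dvd_def)
  next
    assume "\<exists>j. x = g ^ (w * j)"
    then obtain j where "x = g ^ (w * j)" by blast
    then have "i mod (p^m-1) = (w*j) mod (p^m-1)" using x g_pow_eq_iff by simp
    then have "(i mod (p^m-1)) mod w = ((w*j) mod (p^m-1)) mod w" by simp
    moreover have "w dvd p^m - 1" unfolding nw by simp
    ultimately have "i mod w = (w*j) mod w" by (simp add: mod_mod_cancel)
    then show "w dvd i" by (simp add: dvd_eq_mod_eq_0)
  qed
  finally show ?thesis by (simp add: w_def)
qed

lemma K_nz_image: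
  assumes "d dvd m" "d > 0"
  shows "K d - {0} = (\<lambda>j. g ^ (((p^m-1) div (p^d-1)) * j)) ` {..<p^d-1}"
    and "inj_on (\<lambda>j. g ^ (((p^m-1) div (p^d-1)) * j)) {..<p^d-1}"
proof -
  define w where "w = (p^m-1) div (p^d-1)"
  have nw: "p^m - 1 = w * (p^d - 1)" using pd_dvd[OF assms(1)] by (simp add: w_def)
  have L1: "p^d - 1 > 0" using pd_ge2[OF assms(2)] by simp
  have w0: "w > 0" using nw q_ge2 by (cases w) auto
  show "K d - {0} = (\<lambda>j. g ^ (w * j)) ` {..<p^d-1}" unfolding w_def
  proof
    show "K d - {0} \<subseteq> (\<lambda>j. g ^ (((p^m-1) div (p^d-1)) * j)) ` {..<p^d-1}"
    proof
      fix x assume xa: "x \<in> K d - {0}"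
      then obtain j where x: "x = g ^ (w * j)" using K_nz_iff[OF assms] w_def by blast
      have "g ^ (w * j) = g ^ (w * (j mod (p^d-1)))"
        unfolding g_pow_eq_iff nw mod_mult_mult1 by simp
      moreover have "j mod (p^d-1) < p^d-1" using L1 by simp
      ultimately show "x \<in> (\<lambda>j. g ^ (((p^m-1) div (p^d-1)) * j)) ` {..<p^d-1}"
        using x w_def by blast
    qed
    show "(\<lambda>j. g ^ (((p^m-1) div (p^d-1)) * j)) ` {..<p^d-1} \<subseteq> K d - {0}"
      using K_nz_iff[OF assms] g_nz by (auto simp: w_def)
  qed
  show "inj_on (\<lambda>j. g ^ (((p^m-1) div (p^d-1)) * j)) {..<p^d-1}"
  proof (rule inj_onI)
    fix a b assume ab: "a \<in> {..<p^d-1}" "b \<in> {..<p^d-1}"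
      and e: "g ^ (((p^m-1) div (p^d-1)) * a) = g ^ (((p^m-1) div (p^d-1)) * b)"
    have "w * a < p^m - 1" "w * b < p^m - 1" unfolding nw using ab w0 by auto
    then have "w * a = w * b" using e g_pow_eq_iff unfolding w_def by simp
    then show "a = b" using w0 by simp
  qed
qed

lemma card_K_nz: "d dvd m \<Longrightarrow> d > 0 \<Longrightarrow> card (K d - {0}) = p ^ d - 1"
  using K_nz_image[of d] card_image by (simp add: card_image)

lemma card_K: "d dvd m \<Longrightarrow> d > 0 \<Longrightarrow> card (K d) = p ^ d"
proof -
  assume a: "d dvd m" "d > 0"
  have "card (K d - {0}) = card (K d) - 1"
    using K_0 by (simp add: card_Diff_singleton)
  moreover have "card (K d) > 0" using K_0 by (auto simp: card_gt_0_iff)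
  ultimately show ?thesis using card_K_nz[OF a] pd_ge2[OF a(2)] by simp
qed

lemma K_mono: "d dvd e \<Longrightarrow> K d \<subseteq> K e"
proof
  fix x assume "d dvd e" "x \<in> K d"
  then obtain r where e: "e = d * r" by blast
  have "x ^ (p ^ (d * r)) = x"
  proof (induction r)
    case 0 then show ?case by simp
  next
    case (Suc r)
    have "x ^ (p ^ (d * Suc r)) = (x ^ (p ^ d)) ^ (p ^ (d * r))"
      by (simp add: power_add power_mult[symmetric] mult.commute)
    then show ?case using \<open>x \<in> K d\<close> Suc by (simp add: K_def)
  qed
  then show "x \<in> K e" by (simp add: K_def e)
qed

end


definition rou :: "nat \<Rightarrow> complex" where "rou N = cis (2 * pi / N)"

lemma rou_pow: "rou N ^ j = cis (2 * pi * j / N)"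
  unfolding rou_def DeMoivre by (rule arg_cong[where f=cis]) (simp add: field_simps)

lemma rou_pow_N: "N > 0 \<Longrightarrow> rou N ^ N = 1"
  by (simp add: rou_pow)

lemma rou_pow_mod: "N > 0 \<Longrightarrow> rou N ^ j = rou N ^ (j mod N)"
proof -
  assume N: "N > 0"
  have "rou N ^ j = rou N ^ (N * (j div N) + j mod N)" by simp
  also have "\<dots> = rou N ^ (j mod N)" by (simp only: power_add power_mult rou_pow_N[OF N]) simp
  finally show ?thesis .
qed

lemma rou_pow_eq_1_iff: "N > 0 \<Longrightarrow> rou N ^ j = 1 \<longleftrightarrow> N dvd j"
proof
  assume N: "N > 0" and e: "rou N ^ j = 1"
  have "cos (2 * pi * j / N) = 1" using arg_cong[OF e, of Re] by (simp add: rou_pow cis.sel)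
  then obtain z :: int where z: "2 * pi * j / N = of_int z * 2 * pi" using cos_one_2pi_int[of "2 * pi * j / N"] by blast
  then have "real j = z * N" using N by (simp add: field_simps)
  then have "int j = z * int N" by (metis of_int_eq_iff of_int_mult of_int_of_nat_eq)
  then show "N dvd j" by (metis dvd_triv_right int_dvd_int_iff)
next
  assume "N > 0" "N dvd j"
  then show "rou N ^ j = 1" using rou_pow_mod[of N j] by simp
qed

lemma rou_pow_eq_iff: "N > 0 \<Longrightarrow> rou N ^ a = rou N ^ b \<longleftrightarrow> a mod N = b mod N"
proof -
  assume N: "N > 0"
  have nz: "rou N \<noteq> 0" by (simp add: rou_def)
  show ?thesis
  proof (cases "a \<le> b")
    case True
    have "rou N ^ b = rou N ^ a * rou N ^ (b - a)" using True by (simp flip: power_add)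
    then have "rou N ^ a = rou N ^ b \<longleftrightarrow> rou N ^ (b - a) = 1" using nz by auto
    then show ?thesis using rou_pow_eq_1_iff[OF N] mod_eq_dvd_iff_nat[OF True] by metis
  next
    case False
    then have F: "b \<le> a" by simp
    have "rou N ^ a = rou N ^ b * rou N ^ (a - b)" using F by (simp flip: power_add)
    then have "rou N ^ a = rou N ^ b \<longleftrightarrow> rou N ^ (a - b) = 1" using nz by auto
    then show ?thesis using rou_pow_eq_1_iff[OF N] mod_eq_dvd_iff_nat[OF F] by metis
  qed
qed

lemma norm_rou_pow [simp]: "norm (rou N ^ j) = 1" by (simp add: rou_pow)

lemma geom_sum_root: "(z::complex) ^ M = 1 \<Longrightarrow> z \<noteq> 1 \<Longrightarrow> (\<Sum>i<M. z ^ i) = 0"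
  by (simp add: geometric_sum)

context ff
begin

lemma of_nat_eq_iff_mod: "(of_nat a :: 'a) = of_nat b \<longleftrightarrow> a mod p = b mod p"
proof -
  have "(of_nat a :: 'a) = of_nat b \<longleftrightarrow> a mod p = b mod p" if ab: "a < b" for a b
  proof -
    have le: "a \<le> b" using ab by simp
    show ?thesis using of_nat_eq_iff_char_dvd[OF ab, where 'a='a] char_p
      mod_eq_dvd_iff_nat[OF le] by metis
  qed
  then show ?thesis by (metis linorder_neqE_nat)
qed

lemma K1_eq: "K 1 = of_nat ` {..<p}"
proof -
  have sub: "of_nat ` {..<p} \<subseteq> K 1" by (auto simp: K_def frob_of_nat)
  have inj: "inj_on (of_nat :: nat \<Rightarrow> 'a) {..<p}"
    by (rule inj_onI) (simp add: of_nat_eq_iff_mod)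
  have "card (of_nat ` {..<p} :: 'a set) = p" using card_image[OF inj] by simp
  moreover have "card (K 1) = p" using card_K[of 1] by simp
  ultimately show ?thesis using sub by (intro card_subset_eq[symmetric]) auto
qed

definition toZ :: "'a \<Rightarrow> nat" where "toZ y = (SOME j. j < p \<and> y = of_nat j)"

lemma toZ: "y \<in> K 1 \<Longrightarrow> toZ y < p \<and> of_nat (toZ y) = y"
proof -
  assume "y \<in> K 1"
  then have "\<exists>j. j < p \<and> y = of_nat j" using K1_eq by auto
  then show ?thesis unfolding toZ_def by (metis (mono_tags, lifting) someI_ex)
qed

definition Tr :: "nat \<Rightarrow> 'a \<Rightarrow> 'a" where "Tr d x = (\<Sum>i<d. x ^ (p ^ i))"

lemma Tr_add: "Tr d (x + y) = Tr d x + Tr d y"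
  by (simp add: Tr_def frob_add sum.distrib)

lemma K1_sub: "K 1 \<subseteq> K d" using K_mono[of 1 d] by simp

lemma Tr_scal: "c \<in> K 1 \<Longrightarrow> Tr d (c * x) = c * Tr d x"
proof -
  assume c: "c \<in> K 1"
  have "c ^ (p ^ i) = c" for i using K1_sub[of i] c by (auto simp: K_def)
  then show ?thesis by (simp add: Tr_def power_mult_distrib sum_distrib_left)
qed

lemma Tr_in_K1: "x \<in> K d \<Longrightarrow> Tr d x \<in> K 1"
proof -
  assume x: "x \<in> K d"
  have A: "(\<Sum>i<Suc d. x ^ (p ^ i)) = x + (\<Sum>i<d. x ^ (p ^ Suc i))"
    using sum.lessThan_Suc_shift[of "\<lambda>i. x ^ (p ^ i)" d] by simp
  have B: "(\<Sum>i<Suc d. x ^ (p ^ i)) = Tr d x + x" using x by (simp add: Tr_def K_def)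
  have "(Tr d x) ^ (p ^ 1) = (\<Sum>i<d. (x ^ (p ^ i)) ^ (p ^ 1))"
    unfolding Tr_def by (rule frob_sum)
  also have "\<dots> = (\<Sum>i<d. x ^ (p ^ Suc i))"
    by (simp add: power_mult[symmetric] mult.commute)
  also have "\<dots> = Tr d x" using A B by (simp add: add.commute)
  finally show ?thesis by (simp add: K_def)
qed

lemma Tr_trans:
  assumes "x \<in> K (2 * d)"
  shows "Tr (2 * d) x = Tr d (x + x ^ (p ^ d))"
proof -
  have "Tr (2 * d) x = (\<Sum>i<d. x ^ (p ^ i)) + (\<Sum>i\<in>{d..<d+d}. x ^ (p ^ i))"
    unfolding Tr_def by (simp add: mult_2 lessThan_atLeast0 sum.atLeastLessThan_concat)
  also have "(\<Sum>i\<in>{d..<d+d}. x ^ (p ^ i)) = (\<Sum>i<d. x ^ (p ^ (i + d)))"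
    using sum.shift_bounds_nat_ivl[of "\<lambda>i. x ^ (p ^ i)" 0 d d] by (simp add: lessThan_atLeast0)
  also have "\<dots> = (\<Sum>i<d. (x ^ (p ^ d)) ^ (p ^ i))"
    by (simp add: power_mult[symmetric] power_add mult.commute)
  finally show ?thesis by (simp add: Tr_def frob_add sum.distrib)
qed

lemma Tr_nontriv:
  assumes "d dvd m" "d > 0"
  shows "\<exists>x\<in>K d. Tr d x \<noteq> 0"
proof (rule ccontr)
  assume "\<not> ?thesis"
  then have all: "K d \<subseteq> {x. Tr d x = 0}" by auto
  define P :: "'a poly" where "P = (\<Sum>i<d. monom 1 (p ^ i))"
  have ev: "poly P x = Tr d x" for x by (simp add: P_def Tr_def poly_sum poly_monom)
  have cf: "coeff P j = (\<Sum>i<d. if p ^ i = j then 1 else 0)" for j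
    by (simp add: P_def coeff_sum coeff_monom)
  have mono: "i < d \<Longrightarrow> p ^ i \<le> p ^ (d - 1)" for i using p_ge2 by (intro power_increasing) auto
  have "coeff P (p ^ (d - 1)) = (\<Sum>i<d. if i = d - 1 then 1 else 0)"
    unfolding cf using p_ge2 by (intro sum.cong) (auto simp: power_inject_exp)
  also have "\<dots> = 1" using assms(2) by simp
  finally have P0: "P \<noteq> 0" by auto
  have "degree P \<le> p ^ (d - 1)"
  proof (rule degree_le)
    show "\<forall>i>p ^ (d - 1). coeff P i = 0"
      using mono by (auto simp: cf intro!: sum.neutral) (metis leD)
  qed
  have "card (K d) \<le> card {x. poly P x = 0}"
    using all ev by (intro card_mono) (auto intro: poly_roots_finite[OF P0])
  also have "\<dots> \<le> degree P" by (rule card_poly_roots_bound[OF P0])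
  also have "\<dots> \<le> p ^ (d - 1)" by fact
  also have "\<dots> < p ^ d" using assms(2) p_ge2 by (intro power_strict_increasing) auto
  finally show False using card_K[OF assms] by simp
qed

end


context ff
begin

definition psi :: "nat \<Rightarrow> 'a \<Rightarrow> complex" where "psi d x = rou p ^ toZ (Tr d x)"

lemma p_pos: "p > 0" using p_ge2 by simp

lemma toZ_0: "toZ 0 = 0"
proof -
  have "(0::'a) \<in> K 1" by (rule K_0)
  from toZ[OF this] have "toZ 0 < p" "of_nat (toZ 0) = (of_nat 0 :: 'a)" by auto
  then show ?thesis using of_nat_eq_iff_mod[of "toZ 0" 0] by simp
qed

lemma Tr_0: "Tr d 0 = 0" unfolding Tr_def using p_pos by (intro sum.neutral) simp

lemma psi_0 [simp]: "psi d 0 = 1" by (simp add: psi_def Tr_0 toZ_0)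

lemma norm_psi [simp]: "norm (psi d x) = 1" by (simp add: psi_def)

lemma psi_add:
  assumes "x \<in> K d" "y \<in> K d"
  shows "psi d (x + y) = psi d x * psi d y"
proof -
  define a where "a = toZ (Tr d x)"
  define b where "b = toZ (Tr d y)"
  define c where "c = toZ (Tr d (x + y))"
  have tx: "Tr d x \<in> K 1" "Tr d y \<in> K 1" using Tr_in_K1 assms by auto
  have txy: "Tr d (x + y) \<in> K 1" using Tr_in_K1 K_add assms by blast
  have "(of_nat c :: 'a) = Tr d x + Tr d y" using toZ[OF txy] by (simp add: c_def Tr_add)
  also have "\<dots> = of_nat a + of_nat b" using toZ[OF tx(1)] toZ[OF tx(2)] by (simp add: a_def b_def)
  finally have "(of_nat c :: 'a) = of_nat (a + b)" by simp
  then have "c mod p = (a + b) mod p" using of_nat_eq_iff_mod by blast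
  then have "rou p ^ c = rou p ^ (a + b)" using rou_pow_eq_iff[OF p_pos] by blast
  then show ?thesis by (simp add: psi_def a_def b_def c_def power_add)
qed

lemma psi_neg:
  assumes "x \<in> K d"
  shows "psi d (- x) = cnj (psi d x)"
proof -
  have "psi d x * psi d (- x) = 1" using psi_add[OF assms K_neg[OF assms]] by simp
  moreover have "psi d x * cnj (psi d x) = 1"
    using complex_norm_square[of "psi d x"] by simp
  moreover have "psi d x \<noteq> 0" by (metis norm_psi norm_zero zero_neq_one)
  ultimately show ?thesis by (metis mult_left_cancel)
qed

lemma psi_nontriv:
  assumes "d dvd m" "d > 0"
  shows "\<exists>x\<in>K d. psi d x \<noteq> 1"
proof -
  obtain x where x: "x \<in> K d" "Tr d x \<noteq> 0" using Tr_nontriv[OF assms] by blast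
  have t: "Tr d x \<in> K 1" using Tr_in_K1[OF x(1)] .
  have "toZ (Tr d x) \<noteq> 0" by (metis of_nat_0 toZ[OF t] x(2))
  moreover have "toZ (Tr d x) < p" using toZ[OF t] by simp
  ultimately have "\<not> p dvd toZ (Tr d x)" by (auto dest: dvd_imp_le)
  then have "psi d x \<noteq> 1" using rou_pow_eq_1_iff[OF p_pos] by (simp add: psi_def)
  then show ?thesis using x by blast
qed

lemma psi_sum_0:
  assumes "d dvd m" "d > 0"
  shows "(\<Sum>x\<in>K d. psi d x) = 0"
proof -
  obtain x0 where x0: "x0 \<in> K d" "psi d x0 \<noteq> 1" using psi_nontriv[OF assms] by blast
  have "(\<Sum>x\<in>K d. psi d x) = (\<Sum>x\<in>K d. psi d (x + x0))"
    by (rule sum.reindex_bij_witness[of _ "\<lambda>x. x + x0" "\<lambda>x. x - x0"])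
      (auto intro: K_add K_diff x0)
  also have "\<dots> = psi d x0 * (\<Sum>x\<in>K d. psi d x)"
    by (simp add: sum_distrib_left psi_add x0 mult.commute)
  finally show ?thesis using x0(2) by (metis mult_cancel_right1)
qed

lemma psi_orth:
  assumes "d dvd m" "d > 0" "t \<in> K d"
  shows "(\<Sum>c\<in>K d. psi d (c * t)) = (if t = 0 then of_nat (p ^ d) else 0)"
proof (cases "t = 0")
  case True then show ?thesis using card_K[OF assms(1,2)] by simp
next
  case False
  have "(\<Sum>c\<in>K d. psi d (c * t)) = (\<Sum>x\<in>K d. psi d x)"
    by (rule sum.reindex_bij_witness[of _ "\<lambda>x. x / t" "\<lambda>c. c * t"])
      (use False assms(3) in \<open>auto intro: K_mult K_divide\<close>)
  then show ?thesis using psi_sum_0[OF assms(1,2)] False by simp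
qed

lemma psi_orth_nz:
  assumes "d dvd m" "d > 0" "t \<in> K d"
  shows "(\<Sum>c\<in>K d - {0}. psi d (c * t)) = (if t = 0 then of_nat (p ^ d) - 1 else - 1)"
proof -
  have "(\<Sum>c\<in>K d. psi d (c * t)) = psi d (0 * t) + (\<Sum>c\<in>K d - {0}. psi d (c * t))"
    using K_0 by (subst sum.remove[of _ 0]) auto
  moreover have "psi d (0 * t) = 1" by simp
  ultimately have "1 + (\<Sum>c\<in>K d - {0}. psi d (c * t)) = (if t = 0 then of_nat (p ^ d) else 0)"
    using psi_orth[OF assms] by simp
  then show ?thesis by (auto simp: algebra_simps add_eq_0_iff split: if_splits)
qed

end


context ff
begin

lemma n_pos: "p ^ m - 1 > 0" using q_ge2 by linarith

lemma nz_image: "UNIV - {0} = (\<lambda>j. g ^ j) ` {..<p^m-1}"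
  using K_nz_image(1)[of m] K_top n_pos m_pos by simp

lemma sum_nz_gpow: "(\<Sum>x\<in>UNIV - {0}. h x) = (\<Sum>i<p^m-1. h (g ^ i))"
  unfolding nz_image using sum.reindex[OF g_inj, of h] by (simp add: comp_def)

definition dlog :: "'a \<Rightarrow> nat" where "dlog x = (SOME i. x = g ^ i)"

lemma dlog: "x \<noteq> 0 \<Longrightarrow> g ^ dlog x = x"
  unfolding dlog_def by (metis (mono_tags) g_gen someI_ex)

lemma dlog_gpow: "dlog (g ^ i) mod (p^m-1) = i mod (p^m-1)"
  using dlog[of "g ^ i"] g_nz g_pow_eq_iff by simp

definition chi :: "'a \<Rightarrow> complex" where "chi x = rou (p^m-1) ^ dlog x"

lemma chi_gpow: "chi (g ^ i) = rou (p^m-1) ^ i"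
  unfolding chi_def using rou_pow_eq_iff[OF n_pos] dlog_gpow by blast

lemma chi_mult:
  assumes "x \<noteq> 0" "y \<noteq> 0"
  shows "chi (x * y) = chi x * chi y"
proof -
  obtain a b where "x = g ^ a" "y = g ^ b" using g_gen assms by blast
  then show ?thesis by (simp add: chi_gpow flip: power_add)
qed

lemma norm_chi [simp]: "norm (chi x) = 1" by (simp add: chi_def)

lemma chi_1 [simp]: "chi 1 = 1" using chi_gpow[of 0] by simp

lemma chi_nz [simp]: "chi x \<noteq> 0" by (metis norm_chi norm_zero zero_neq_one)

lemma cnj_unit: "norm (z::complex) = 1 \<Longrightarrow> cnj z = inverse z"
proof -
  assume "norm z = 1"
  then have "z * cnj z = 1" using complex_norm_square[of z] by simp
  then show ?thesis by (simp add: inverse_unique)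
qed

definition G :: "('a \<Rightarrow> complex) \<Rightarrow> complex" where
  "G f = (\<Sum>x\<in>UNIV - {0}. f x * psi m x)"

lemma psi_top_orth_nz: "(\<Sum>c\<in>UNIV - {0}. psi m (c * t)) = (if t = 0 then of_nat (p ^ m) - 1 else - 1)"
  using psi_orth_nz[of m t] K_top m_pos by simp

lemma gauss_norm:
  assumes mult: "\<And>x y. x \<noteq> 0 \<Longrightarrow> y \<noteq> 0 \<Longrightarrow> f (x * y) = f x * f y"
    and nrm: "\<And>x. x \<noteq> 0 \<Longrightarrow> norm (f x) = 1"
    and nontriv: "(\<Sum>x\<in>UNIV - {0}. f x) = 0"
  shows "G f * cnj (G f) = of_nat (p ^ m)"
proof -
  define U where "U = (UNIV - {0::'a})"
  have fU: "finite U" by (simp add: U_def)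
  have f1: "f 1 = 1"
  proof -
    have "f 1 = f 1 * f 1" using mult[of 1 1] by simp
    moreover have "f 1 \<noteq> 0" using nrm[of 1] by auto
    ultimately show ?thesis by simp
  qed
  have cf: "cnj (f y) = f (inverse y)" if "y \<noteq> 0" for y
  proof -
    have "f y * f (inverse y) = 1" using mult[of y "inverse y"] that f1 by simp
    then show ?thesis using cnj_unit[OF nrm[OF that]] by (simp add: inverse_unique)
  qed
  have cG: "cnj (G f) = (\<Sum>y\<in>U. cnj (f y) * cnj (psi m y))" by (simp add: G_def U_def cnj_sum)
  have "G f * cnj (G f) = (\<Sum>x\<in>U. \<Sum>y\<in>U. (f x * psi m x) * (cnj (f y) * cnj (psi m y)))"
    unfolding cG by (simp add: G_def U_def sum_product)
  also have "\<dots> = (\<Sum>y\<in>U. \<Sum>x\<in>U. (f x * psi m x) * (cnj (f y) * cnj (psi m y)))"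
    by (rule sum.swap)
  also have "\<dots> = (\<Sum>y\<in>U. \<Sum>x\<in>U. f x * cnj (f y) * (psi m x * cnj (psi m y)))"
    by (intro sum.cong refl) (simp add: mult_ac)
  also have "\<dots> = (\<Sum>y\<in>U. \<Sum>x\<in>U. f (x / y) * psi m (x - y))"
  proof (intro sum.cong refl)
    fix x y assume "x \<in> U" "y \<in> U"
    then have xy: "x \<noteq> 0" "y \<noteq> 0" by (auto simp: U_def)
    have "f x * cnj (f y) = f (x / y)" using cf[OF xy(2)] mult[of x "inverse y"] xy
      by (simp add: divide_inverse)
    moreover have "psi m x * cnj (psi m y) = psi m (x - y)"
      using psi_add[of x m "-y"] psi_neg[of y m] K_top by simp
    ultimately show "f x * cnj (f y) * (psi m x * cnj (psi m y)) = f (x / y) * psi m (x - y)"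
      by simp
  qed
  also have "\<dots> = (\<Sum>y\<in>U. \<Sum>z\<in>U. f z * psi m ((z - 1) * y))"
  proof (rule sum.cong[OF refl])
    fix y assume "y \<in> U"
    then have y: "y \<noteq> 0" by (auto simp: U_def)
    show "(\<Sum>x\<in>U. f (x / y) * psi m (x - y)) = (\<Sum>z\<in>U. f z * psi m ((z - 1) * y))"
      by (rule sum.reindex_bij_witness[of _ "\<lambda>z. z * y" "\<lambda>x. x / y"])
        (use y in \<open>auto simp: U_def algebra_simps\<close>)
  qed
  also have "\<dots> = (\<Sum>z\<in>U. f z * (\<Sum>y\<in>U. psi m (y * (z - 1))))"
    by (subst sum.swap) (simp add: sum_distrib_left mult.commute)
  also have "\<dots> = (\<Sum>z\<in>U. f z * (if z = 1 then of_nat (p ^ m) - 1 else - 1))"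
    unfolding U_def using psi_top_orth_nz by simp
  also have "\<dots> = (\<Sum>z\<in>U. f z * (if z = 1 then of_nat (p ^ m) else 0) - f z)"
    by (intro sum.cong refl) (auto simp: algebra_simps)
  also have "\<dots> = (\<Sum>z\<in>U. f z * (if z = 1 then of_nat (p ^ m) else 0)) - (\<Sum>z\<in>U. f z)"
    by (simp add: sum_subtractf)
  also have "(\<Sum>z\<in>U. f z * (if z = 1 then of_nat (p ^ m) else 0)) = (\<Sum>z\<in>U. if z = 1 then f 1 * of_nat (p ^ m) else 0)"
    by (intro sum.cong refl) auto
  also have "\<dots> = f 1 * of_nat (p ^ m)" by (simp add: sum.delta U_def)
  also have "f 1 * of_nat (p ^ m) - (\<Sum>z\<in>U. f z) = of_nat (p ^ m)"
    using nontriv f1 by (simp add: U_def)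
  finally show ?thesis .
qed

end


context ff
begin

lemma R_iff:
  assumes k: "k > 0" "k dvd p^m - 1"
  shows "y \<in> kth_powers k \<longleftrightarrow> y \<noteq> 0 \<and> k dvd dlog y"
proof
  assume "y \<in> kth_powers k"
  then obtain x where x: "x \<noteq> 0" "y = x ^ k" by (auto simp: kth_powers_def)
  obtain c where c: "x = g ^ c" using g_gen x(1) by blast
  have y0: "y \<noteq> 0" using x by simp
  have "y = g ^ (c * k)" using x c by (simp add: power_mult)
  then have "dlog y mod (p^m-1) = (c * k) mod (p^m-1)" using dlog_gpow by simp
  then have "dlog y mod (p^m-1) mod k = (c * k) mod (p^m-1) mod k" by simp
  then have "dlog y mod k = (c * k) mod k" using k(2) by (simp add: mod_mod_cancel)
  then show "y \<noteq> 0 \<and> k dvd dlog y" using y0 by (simp add: dvd_eq_mod_eq_0)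
next
  assume "y \<noteq> 0 \<and> k dvd dlog y"
  then obtain e where e: "y \<noteq> 0" "dlog y = k * e" by blast
  have "y = (g ^ e) ^ k" using dlog[OF e(1)] e(2) by (simp add: power_mult mult.commute)
  moreover have "g ^ e \<noteq> 0" using g_nz by simp
  ultimately show "y \<in> kth_powers k" by (auto simp: kth_powers_def)
qed

lemma R_image:
  assumes k: "k > 0" "k dvd p^m - 1"
  shows "kth_powers k = (\<lambda>e. g ^ (k * e)) ` {..<(p^m-1) div k}"
    and "inj_on (\<lambda>e. g ^ (k * e)) {..<(p^m-1) div k}"
proof -
  define w where "w = (p^m-1) div k"
  have nw: "p^m - 1 = k * w" using k by (simp add: w_def)
  show "kth_powers k = (\<lambda>e. g ^ (k * e)) ` {..<(p^m-1) div k}"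
  proof
    show "kth_powers k \<subseteq> (\<lambda>e. g ^ (k * e)) ` {..<(p^m-1) div k}"
    proof
      fix y :: 'a assume "y \<in> kth_powers k"
      then have y: "y \<noteq> 0" "k dvd dlog y" using R_iff[OF k] by auto
      then obtain e where e: "dlog y = k * e" by blast
      have "y = g ^ (k * e)" using dlog[OF y(1)] e by simp
      also have "\<dots> = g ^ (k * (e mod w))"
        unfolding g_pow_eq_iff nw mod_mult_mult1 by simp
      finally have "y = g ^ (k * (e mod w))" .
      moreover have "e mod w < w" using nw n_pos by (simp add: nat_0_less_mult_iff)
      ultimately show "y \<in> (\<lambda>e. g ^ (k * e)) ` {..<(p^m-1) div k}" by (auto simp: w_def)
    qed
    show "(\<lambda>e. g ^ (k * e)) ` {..<(p^m-1) div k} \<subseteq> kth_powers k"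
    proof
      fix y assume "y \<in> (\<lambda>e. g ^ (k * e)) ` {..<(p^m-1) div k}"
      then obtain e where "y = g ^ (k * e)" by blast
      then have "y = (g ^ e) ^ k" by (simp add: power_mult[symmetric] mult.commute)
      moreover have "g ^ e \<noteq> 0" using g_nz by simp
      ultimately show "y \<in> kth_powers k" by (auto simp: kth_powers_def)
    qed
  qed
  show "inj_on (\<lambda>e. g ^ (k * e)) {..<(p^m-1) div k}"
  proof (rule inj_onI)
    fix a b assume ab: "a \<in> {..<(p^m-1) div k}" "b \<in> {..<(p^m-1) div k}"
      and e: "g ^ (k * a) = g ^ (k * b)"
    have "k * a < p^m - 1" "k * b < p^m - 1" unfolding nw using ab k by (auto simp: w_def)
    then have "k * a = k * b" using e g_pow_eq_iff by simp
    then show "a = b" using k by simp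
  qed
qed

lemma card_R:
  assumes "k > 0" "k dvd p^m - 1"
  shows "card (kth_powers k :: 'a set) = (p^m-1) div k"
  using R_image[OF assms] by (simp add: card_image)

definition fj :: "nat \<Rightarrow> nat \<Rightarrow> 'a \<Rightarrow> complex" where
  "fj k j x = chi x ^ (j * ((p^m-1) div k))"

lemma fj_mult: "x \<noteq> 0 \<Longrightarrow> y \<noteq> 0 \<Longrightarrow> fj k j (x * y) = fj k j x * fj k j y"
  by (simp add: fj_def chi_mult power_mult_distrib)

lemma norm_fj [simp]: "norm (fj k j x) = 1"
  by (simp add: fj_def norm_power)

lemma fj_div:
  assumes "x \<noteq> 0" "b \<noteq> 0"
  shows "cnj (fj k j b) * fj k j x = fj k j (x / b)"
proof -
  have "fj k j (x / b) * fj k j b = fj k j x" using fj_mult[of "x / b" b k j] assms by simp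
  have "cnj (fj k j b) * fj k j b = 1"
    using complex_norm_square[of "fj k j b"] by (simp add: mult.commute)
  have "fj k j x = fj k j (x / b) * fj k j b" using \<open>fj k j (x / b) * fj k j b = fj k j x\<close> by simp
  then have "cnj (fj k j b) * fj k j x = cnj (fj k j b) * fj k j b * fj k j (x / b)"
    by (simp add: mult_ac)
  then show ?thesis using \<open>cnj (fj k j b) * fj k j b = 1\<close> by simp
qed

lemma sum_fj:
  assumes k: "k > 0" "k dvd p^m - 1" and y: "y \<noteq> 0"
  shows "(\<Sum>j<k. fj k j y) = (if y \<in> kth_powers k then of_nat k else 0)"
proof -
  define w where "w = (p^m-1) div k"
  have nw: "p^m - 1 = k * w" using k by (simp add: w_def)
  have w0: "w > 0" using nw n_pos by (cases w) auto
  define z where "z = chi y ^ w"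
  have fz: "fj k j y = z ^ j" for j unfolding fj_def z_def w_def by (simp only: power_mult[symmetric] mult.commute)
  have z: "z = rou (p^m-1) ^ (dlog y * w)" by (simp add: z_def chi_def power_mult)
  have zk: "z ^ k = 1"
  proof -
    have "(p^m-1) dvd dlog y * w * k" using nw by simp
    then show ?thesis unfolding z power_mult[symmetric] using rou_pow_eq_1_iff[OF n_pos] by blast
  qed
  have z1: "z = 1 \<longleftrightarrow> k dvd dlog y"
  proof -
    have "z = 1 \<longleftrightarrow> (p^m-1) dvd dlog y * w" unfolding z using rou_pow_eq_1_iff[OF n_pos] by blast
    also have "\<dots> \<longleftrightarrow> k * w dvd dlog y * w" using nw by simp
    also have "\<dots> \<longleftrightarrow> k dvd dlog y" using w0 by (simp add: dvd_times_right_cancel_iff)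
    finally show ?thesis .
  qed
  show ?thesis
  proof (cases "k dvd dlog y")
    case True
    then show ?thesis using R_iff[OF k] y z1 by (simp add: fz)
  next
    case False
    then have "(\<Sum>j<k. z ^ j) = 0" using geom_sum_root[OF zk] z1 by simp
    then show ?thesis using R_iff[OF k] y False by (simp add: fz)
  qed
qed

definition lam :: "'a set \<Rightarrow> 'a \<Rightarrow> complex" where
  "lam S b = (\<Sum>s\<in>S. psi m (b * s))"

lemma decomp:
  assumes k: "k > 0" "k dvd p^m - 1" and b: "b \<noteq> 0"
  shows "of_nat k * lam (kth_powers k) b = (\<Sum>j<k. cnj (fj k j b) * G (fj k j))"
proof -
  define U where "U = (UNIV - {0::'a})"
  define R where "R = (kth_powers k :: 'a set)"
  have RU: "R \<subseteq> U" by (auto simp: R_def U_def kth_powers_def)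
  have "(\<Sum>j<k. cnj (fj k j b) * G (fj k j)) = (\<Sum>j<k. \<Sum>x\<in>U. cnj (fj k j b) * fj k j x * psi m x)"
    by (simp add: G_def U_def sum_distrib_left mult.assoc)
  also have "\<dots> = (\<Sum>x\<in>U. psi m x * (\<Sum>j<k. fj k j (x / b)))"
    by (subst sum.swap) (auto simp: U_def sum_distrib_left fj_div b intro!: sum.cong)
  also have "\<dots> = (\<Sum>x\<in>U. psi m x * (if x / b \<in> R then of_nat k else 0))"
    by (intro sum.cong refl) (auto simp: U_def sum_fj[OF k] b R_def)
  also have "\<dots> = (\<Sum>s\<in>U. psi m (b * s) * (if s \<in> R then of_nat k else 0))"
    by (rule sum.reindex_bij_witness[of _ "\<lambda>s. b * s" "\<lambda>x. x / b"]) (use b in \<open>auto simp: U_def\<close>)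
  also have "\<dots> = (\<Sum>s\<in>U. if s \<in> R then of_nat k * psi m (b * s) else 0)"
    by (intro sum.cong refl) auto
  also have "\<dots> = (\<Sum>s\<in>R. of_nat k * psi m (b * s))"
    using RU by (simp add: sum.inter_restrict[symmetric] Int_absorb1 U_def)
  finally show ?thesis by (simp add: lam_def R_def sum_distrib_left)
qed

lemma G_f0: "G (fj k 0) = - 1"
  using psi_top_orth_nz[of 1] by (simp add: G_def fj_def)

lemma fj_nontriv:
  assumes k: "k > 0" "k dvd p^m - 1" and j: "0 < j" "j < k"
  shows "(\<Sum>x\<in>UNIV - {0}. fj k j x) = 0"
proof -
  define w where "w = (p^m-1) div k"
  have nw: "p^m - 1 = k * w" using k by (simp add: w_def)
  have w0: "w > 0" using nw n_pos by (cases w) auto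
  define z where "z = rou (p^m-1) ^ (j * w)"
  have "(\<Sum>x\<in>UNIV - {0}. fj k j x) = (\<Sum>i<p^m-1. z ^ i)"
    by (simp add: sum_nz_gpow fj_def chi_gpow z_def w_def power_mult[symmetric] mult.commute)
  also have "\<dots> = 0"
  proof (rule geom_sum_root)
    show "z ^ (p^m-1) = 1" unfolding z_def power_mult[symmetric]
      using rou_pow_eq_1_iff[OF n_pos] by simp
    have "\<not> (p^m-1) dvd j * w"
    proof
      assume "(p^m-1) dvd j * w"
      then have "k * w dvd j * w" using nw by metis
      then have "k dvd j" using w0 by (simp add: dvd_times_right_cancel_iff)
      then show False using j by (auto dest: dvd_imp_le)
    qed
    then show "z \<noteq> 1" unfolding z_def using rou_pow_eq_1_iff[OF n_pos] by simp
  qed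
  finally show ?thesis .
qed

lemma G_fj_norm:
  assumes k: "k > 0" "k dvd p^m - 1" and j: "0 < j" "j < k"
  shows "norm (G (fj k j)) = sqrt (p ^ m)"
proof -
  have "G (fj k j) * cnj (G (fj k j)) = of_nat (p ^ m)"
    by (rule gauss_norm) (use fj_mult fj_nontriv[OF k j] in auto)
  then have "(norm (G (fj k j)))^2 = p ^ m"
    using complex_norm_square[of "G (fj k j)"] by (metis of_nat_power of_real_eq_iff of_real_of_nat_eq of_real_power)
  then show ?thesis by (metis norm_ge_zero real_sqrt_unique of_nat_power)
qed

lemma lam_bound:
  assumes k: "k > 0" "k dvd p^m - 1" and b: "b \<noteq> 0"
  shows "k * norm (lam (kth_powers k) b) \<le> 1 + (k - 1) * sqrt (p ^ m)"
proof -
  have "k * norm (lam (kth_powers k) b) = norm (\<Sum>j<k. cnj (fj k j b) * G (fj k j))"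
    using decomp[OF k b] by (metis norm_mult norm_of_nat)
  also have "\<dots> \<le> (\<Sum>j<k. norm (cnj (fj k j b) * G (fj k j)))" by (rule norm_sum)
  also have "\<dots> = (\<Sum>j<k. norm (G (fj k j)))" by (simp add: norm_mult)
  also have "\<dots> = norm (G (fj k 0)) + (\<Sum>j\<in>{1..<k}. norm (G (fj k j)))"
    using k(1) by (simp add: lessThan_atLeast0 sum.atLeast_Suc_lessThan)
  also have "\<dots> = 1 + (\<Sum>j\<in>{1..<k}. sqrt (p ^ m))"
    using G_fj_norm[OF k] G_f0 by simp
  also have "\<dots> = 1 + (real k - 1) * sqrt (p ^ m)" using k(1) by (simp add: of_nat_diff)
  finally show ?thesis .
qed

end


lemma quad_two:
  fixes a b x1 x2 r :: "'a::field"
  assumes "x1 \<noteq> x2" "x1 * x1 - a * x1 + b = 0" "x2 * x2 - a * x2 + b = 0" "r * r - a * r + b = 0"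
  shows "r = x1 \<or> r = x2"
proof -
  have "(x1 - x2) * (x1 + x2 - a) = (x1*x1 - a*x1 + b) - (x2*x2 - a*x2 + b)" by (simp add: algebra_simps)
  then have "(x1 - x2) * (x1 + x2 - a) = 0" using assms(2,3) by simp
  then have a: "a = x1 + x2" using assms(1) by simp
  have e: "x1 * x1 - (x1 + x2) * x1 + b = 0" using assms(2) a by simp
  have "b = (x1 * x1 - (x1 + x2) * x1 + b) + x1 * x2" by (simp add: algebra_simps)
  also have "\<dots> = x1 * x2" unfolding e by simp
  finally have b: "b = x1 * x2" .
  have "(r - x1) * (r - x2) = r * r - (x1 + x2) * r + x1 * x2" by (simp add: algebra_simps)
  then have "(r - x1) * (r - x2) = 0" using assms(4) a b by simp
  then show ?thesis by simp
qed

lemma quad_card: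
  fixes a b :: "'a::{finite,field}"
  shows "card {x. x * x - a * x + b = 0} \<le> 2"
proof (cases "\<exists>x1 x2. x1 \<noteq> x2 \<and> x1 \<in> {x. x * x - a * x + b = 0} \<and> x2 \<in> {x. x * x - a * x + b = 0}")
  case True
  then obtain x1 x2 where x: "x1 \<noteq> x2" "x1 * x1 - a * x1 + b = 0" "x2 * x2 - a * x2 + b = 0" by auto
  have "{x. x * x - a * x + b = 0} \<subseteq> {x1, x2}" using quad_two[OF x] by auto
  then have "card {x. x * x - a * x + b = 0} \<le> card {x1, x2}" by (intro card_mono) auto
  moreover have "card {x1, x2} = 2" using x(1) by simp
  ultimately show ?thesis by simp
next
  case False
  then have "card {x. x * x - a * x + b = 0} \<le> Suc 0" by (subst card_le_Suc0_iff_eq) auto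
  then show ?thesis by simp
qed

context ff
begin

definition N2 :: "nat \<Rightarrow> 'a \<Rightarrow> 'a \<Rightarrow> 'a set" where
  "N2 d a b = {x\<in>K (2*d). x + x ^ (p^d) = a \<and> x ^ (p^d + 1) = b}"

definition N1 :: "nat \<Rightarrow> 'a \<Rightarrow> 'a \<Rightarrow> ('a \<times> 'a) set" where
  "N1 d a b = {(u, v)\<in>K d \<times> K d. u + v = a \<and> u * v = b}"

lemma K_2d_norm:
  assumes "x \<in> K (2*d)"
  shows "x + x ^ (p^d) \<in> K d" "x ^ (p^d + 1) \<in> K d"
proof -
  have x2: "(x ^ (p^d)) ^ (p^d) = x" using assms
    by (simp add: K_def power_mult[symmetric] power_add[symmetric] mult_2 flip: power_add)
  show "x + x ^ (p^d) \<in> K d" using x2 by (simp add: K_def frob_add add.commute)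
  show "x ^ (p^d + 1) \<in> K d" using x2
    by (simp add: K_def power_mult_distrib flip: power_mult)
qed

lemma N_card_le:
  assumes a: "a \<in> K d" and b: "b \<in> K d"
  shows "card (N2 d a b) + card (N1 d a b) \<le> 2"
proof -
  define Z where "Z = {x::'a. x * x - a * x + b = 0}"
  have N2Z: "N2 d a b \<subseteq> Z"
    by (auto simp: N2_def Z_def algebra_simps power_Suc2)
  have cN1: "card (N1 d a b) = card (Z \<inter> K d)"
  proof (rule bij_betw_same_card[of fst])
    show "bij_betw fst (N1 d a b) (Z \<inter> K d)"
    proof (rule bij_betw_byWitness[of _ "\<lambda>u. (u, a - u)"])
      show "\<forall>x\<in>N1 d a b. (fst x, a - fst x) = x" by (auto simp: N1_def)
      show "\<forall>u\<in>Z \<inter> K d. fst (u, a - u) = u" by simp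
      show "fst ` N1 d a b \<subseteq> Z \<inter> K d" by (auto simp: N1_def Z_def algebra_simps)
      show "(\<lambda>u. (u, a - u)) ` (Z \<inter> K d) \<subseteq> N1 d a b"
        using a by (auto simp: N1_def Z_def algebra_simps intro: K_diff)
    qed
  qed
  show ?thesis
  proof (cases "N2 d a b \<inter> K d = {}")
    case True
    then have "N2 d a b \<subseteq> Z - K d" using N2Z by auto
    then have "card (N2 d a b) \<le> card (Z - K d)" by (intro card_mono) auto
    moreover have "card (Z - K d) = card Z - card (Z \<inter> K d)" by (simp add: card_Diff_subset_Int)
    moreover have "card (Z \<inter> K d) \<le> card Z" by (simp add: card_mono)
    moreover have "card Z \<le> 2" unfolding Z_def by (rule quad_card)
    ultimately show ?thesis using cN1 by linarith
  next
    case False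
    then obtain x where x: "x \<in> N2 d a b" "x \<in> K d" by auto
    have xL: "x ^ (p^d) = x" using x(2) by (simp add: K_def)
    have ab: "a = x + x" "b = x * x" using x(1) xL by (auto simp: N2_def power_Suc2)
    have Zx: "Z \<subseteq> {x}"
    proof
      fix r assume "r \<in> Z"
      then have "(r - x) * (r - x) = 0" using ab by (simp add: Z_def algebra_simps)
      then show "r \<in> {x}" by simp
    qed
    have "card (N2 d a b) \<le> card {x}" using N2Z Zx by (intro card_mono) auto
    moreover have "card (Z \<inter> K d) \<le> card {x}" using Zx by (intro card_mono) auto
    ultimately show ?thesis using cN1 by simp
  qed
qed

end


lemma sum_fiber:
  fixes F :: "'b \<Rightarrow> 'c::comm_semiring_1"
  assumes "finite S" "finite T" "g ` S \<subseteq> T"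
  shows "(\<Sum>x\<in>S. F (g x)) = (\<Sum>y\<in>T. of_nat (card {x\<in>S. g x = y}) * F y)"
proof -
  have "(\<Sum>x\<in>S. F (g x)) = (\<Sum>y\<in>T. \<Sum>x\<in>{x\<in>S. g x = y}. F (g x))"
    using sum.group[OF assms, of "\<lambda>x. F (g x)"] by simp
  also have "\<dots> = (\<Sum>y\<in>T. of_nat (card {x\<in>S. g x = y}) * F y)"
    by (intro sum.cong refl) simp
  finally show ?thesis .
qed

lemma sum_drop0:
  fixes h :: "'a::zero \<Rightarrow> 'b::ab_group_add"
  assumes "finite A" "h 0 = 0"
  shows "(\<Sum>x\<in>A. h x) = (\<Sum>x\<in>A - {0}. h x)"
  using assms by (simp add: sum_diff1)

context ff
begin

lemma K_2d_norm': "x \<in> K (2*d) \<Longrightarrow> x * x ^ (p^d) \<in> K d"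
  using K_2d_norm(2)[of x d] by simp

lemma N_sum2:
  assumes d: "d > 0" "2*d dvd m"
  shows "(\<Sum>y\<in>K d \<times> K d. card (N2 d (fst y) (snd y))) = p^(2*d)"
proof -
  have "(\<Sum>y\<in>K d \<times> K d. of_nat (card {x\<in>K (2*d). (x + x^(p^d), x^(p^d+1)) = y}) * (1::nat))
        = (\<Sum>x\<in>K (2*d). 1)"
    by (rule sum_fiber[symmetric]) (auto simp: K_2d_norm K_2d_norm')
  moreover have "{x\<in>K (2*d). (x + x^(p^d), x^(p^d+1)) = y} = N2 d (fst y) (snd y)" for y
    by (cases y) (auto simp: N2_def)
  ultimately show ?thesis using card_K[of "2*d"] d by simp
qed

lemma N_sum1:
  assumes d: "d > 0" "2*d dvd m"
  shows "(\<Sum>y\<in>K d \<times> K d. card (N1 d (fst y) (snd y))) = p^(2*d)"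
proof -
  have dm: "d dvd m" using d(2) by (metis dvd_mult_right)
  have "(\<Sum>y\<in>K d \<times> K d. of_nat (card {x\<in>K d \<times> K d. (fst x + snd x, fst x * snd x) = y}) * (1::nat))
        = (\<Sum>x\<in>K d \<times> K d. 1)"
    by (rule sum_fiber[symmetric]) (auto intro: K_add K_mult)
  moreover have "{x\<in>K d \<times> K d. (fst x + snd x, fst x * snd x) = y} = N1 d (fst y) (snd y)" for y
    by (cases y) (auto simp: N1_def)
  ultimately show ?thesis using card_K[OF dm d(1)] by (simp add: card_cartesian_product power_mult_distrib
        flip: power_add mult_2)
qed

lemma N_eq:
  assumes d: "d > 0" "2*d dvd m" and ab: "a \<in> K d" "b \<in> K d"
  shows "card (N2 d a b) + card (N1 d a b) = 2"
proof -
  have dm: "d dvd m" using d(2) by (metis dvd_mult_right)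
  have "(\<Sum>y\<in>K d \<times> K d. card (N2 d (fst y) (snd y)) + card (N1 d (fst y) (snd y)))
        = (\<Sum>y\<in>K d \<times> K d. 2)"
    using N_sum1[OF d] N_sum2[OF d] card_K[OF dm d(1)]
    by (simp add: sum.distrib card_cartesian_product power_mult_distrib flip: power_add mult_2)
  from sum_mono_inv[OF this _ _ finite] ab show ?thesis
    using N_card_le by auto
qed

definition Gd :: "nat \<Rightarrow> ('a \<Rightarrow> complex) \<Rightarrow> complex" where
  "Gd d f = (\<Sum>x\<in>K d - {0}. f x * psi d x)"

lemma Gd_top: "Gd m f = G f" by (simp add: Gd_def G_def K_top)

lemma psi_trans: "x \<in> K (2*d) \<Longrightarrow> psi (2*d) x = psi d (x + x ^ (p^d))"
  by (simp add: psi_def Tr_trans)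

lemma lift:
  assumes d: "d > 0" "2*d dvd m"
    and mult: "\<And>u v. u \<in> K d \<Longrightarrow> v \<in> K d \<Longrightarrow> u \<noteq> 0 \<Longrightarrow> v \<noteq> 0 \<Longrightarrow> f (u * v) = f u * f v"
  shows "Gd (2*d) (\<lambda>x. f (x ^ (p^d+1))) = - (Gd d f * Gd d f)"
proof -
  have dm: "d dvd m" using d(2) by (metis dvd_mult_right)
  define Fn :: "'a \<times> 'a \<Rightarrow> complex" where "Fn y = (if snd y = 0 then 0 else f (snd y) * psi d (fst y))" for y
  define T where "T = K d \<times> K d"
  have "Gd (2*d) (\<lambda>x. f (x ^ (p^d+1))) = (\<Sum>x\<in>K (2*d) - {0}. Fn (x + x^(p^d), x^(p^d+1)))"
    unfolding Gd_def by (intro sum.cong refl) (auto simp: Fn_def psi_trans)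
  also have "\<dots> = (\<Sum>x\<in>K (2*d). Fn (x + x^(p^d), x^(p^d+1)))"
    by (rule sum_drop0[symmetric]) (auto simp: Fn_def)
  also have "\<dots> = (\<Sum>y\<in>T. of_nat (card (N2 d (fst y) (snd y))) * Fn y)"
  proof -
    have "(\<Sum>x\<in>K (2*d). Fn (x + x^(p^d), x^(p^d+1)))
       = (\<Sum>y\<in>T. of_nat (card {x\<in>K (2*d). (x + x^(p^d), x^(p^d+1)) = y}) * Fn y)"
      by (rule sum_fiber) (auto simp: T_def K_2d_norm K_2d_norm')
    moreover have "{x\<in>K (2*d). (x + x^(p^d), x^(p^d+1)) = y} = N2 d (fst y) (snd y)" for y
      by (cases y) (auto simp: N2_def)
    ultimately show ?thesis by simp
  qed
  also have "\<dots> = (\<Sum>y\<in>T. (2 - of_nat (card (N1 d (fst y) (snd y)))) * Fn y)"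
  proof (intro sum.cong refl)
    fix y assume "y \<in> T"
    then have "card (N2 d (fst y) (snd y)) + card (N1 d (fst y) (snd y)) = 2"
      using N_eq[OF d] by (auto simp: T_def)
    then have "(of_nat (card (N2 d (fst y) (snd y))) :: complex) = 2 - of_nat (card (N1 d (fst y) (snd y)))"
      by (metis add_diff_cancel_right' of_nat_add of_nat_numeral)
    then show "of_nat (card (N2 d (fst y) (snd y))) * Fn y = (2 - of_nat (card (N1 d (fst y) (snd y)))) * Fn y"
      by simp
  qed
  also have "\<dots> = 2 * (\<Sum>y\<in>T. Fn y) - (\<Sum>y\<in>T. of_nat (card (N1 d (fst y) (snd y))) * Fn y)"
    by (simp add: algebra_simps sum_subtractf sum_distrib_left sum_distrib_right)
  also have "(\<Sum>y\<in>T. Fn y) = 0"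
  proof -
    have "(\<Sum>y\<in>T. Fn y) = (\<Sum>a\<in>K d. \<Sum>b\<in>K d. Fn (a, b))"
      unfolding T_def by (simp add: sum.cartesian_product case_prod_unfold)
    also have "\<dots> = (\<Sum>b\<in>K d. \<Sum>a\<in>K d. Fn (a, b))" by (rule sum.swap)
    also have "\<dots> = (\<Sum>b\<in>K d. (if b = 0 then 0 else f b) * (\<Sum>a\<in>K d. psi d a))"
      by (intro sum.cong refl) (auto simp: Fn_def sum_distrib_left)
    also have "\<dots> = 0" using psi_sum_0[OF dm d(1)] by simp
    finally show ?thesis .
  qed
  also have "(\<Sum>y\<in>T. of_nat (card (N1 d (fst y) (snd y))) * Fn y) = (\<Sum>x\<in>T. Fn (fst x + snd x, fst x * snd x))"
  proof -
    have "(\<Sum>x\<in>T. Fn (fst x + snd x, fst x * snd x))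
       = (\<Sum>y\<in>T. of_nat (card {x\<in>T. (fst x + snd x, fst x * snd x) = y}) * Fn y)"
      by (rule sum_fiber) (auto simp: T_def intro: K_add K_mult)
    moreover have "{x\<in>T. (fst x + snd x, fst x * snd x) = y} = N1 d (fst y) (snd y)" for y
      by (cases y) (auto simp: N1_def T_def)
    ultimately show ?thesis by simp
  qed
  also have "(\<Sum>x\<in>T. Fn (fst x + snd x, fst x * snd x)) = Gd d f * Gd d f"
  proof -
    have "(\<Sum>x\<in>T. Fn (fst x + snd x, fst x * snd x)) = (\<Sum>u\<in>K d. \<Sum>v\<in>K d. Fn (u + v, u * v))"
      unfolding T_def by (simp add: sum.cartesian_product case_prod_unfold)
    also have "\<dots> = (\<Sum>u\<in>K d - {0}. \<Sum>v\<in>K d. Fn (u + v, u * v))"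
      by (rule sum_drop0) (auto simp: Fn_def)
    also have "\<dots> = (\<Sum>u\<in>K d - {0}. \<Sum>v\<in>K d - {0}. Fn (u + v, u * v))"
      by (intro sum.cong refl sum_drop0) (auto simp: Fn_def)
    also have "\<dots> = (\<Sum>u\<in>K d - {0}. \<Sum>v\<in>K d - {0}. (f u * psi d u) * (f v * psi d v))"
      by (intro sum.cong refl) (auto simp: Fn_def mult psi_add mult_ac)
    also have "\<dots> = Gd d f * Gd d f"
      by (simp add: Gd_def sum_product)
    finally show ?thesis .
  qed
  finally show ?thesis by simp
qed

lemma z0_ex:
  assumes d: "d > 0" "2*d dvd m"
  shows "\<exists>z\<in>K (2*d). z \<noteq> 0 \<and> z + z ^ (p^d) = 0"
proof -
  have dm: "d dvd m" using d(2) by (metis dvd_mult_right)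
  define T where "T x = x + x ^ (p^d)" for x :: 'a
  have sub: "T ` K (2*d) \<subseteq> K d" using K_2d_norm by (auto simp: T_def)
  have "card (T ` K (2*d)) \<le> p^d" using card_mono[OF _ sub] card_K[OF dm d(1)] by simp
  moreover have "p^d < p^(2*d)" using d p_ge2 by (intro power_strict_increasing) auto
  moreover have "card (K (2*d)) = p^(2*d)" using card_K[of "2*d"] d by simp
  ultimately have "\<not> inj_on T (K (2*d))" by (metis card_image less_le_not_le)
  then obtain x y where xy: "x \<in> K (2*d)" "y \<in> K (2*d)" "x \<noteq> y" "T x = T y"
    by (auto simp: inj_on_def)
  have "T (x - y) = 0" using xy(4) by (simp add: T_def frob_diff algebra_simps)
  moreover have "x - y \<in> K (2*d)" using xy by (intro K_diff)
  ultimately show ?thesis using xy(3) by (intro bexI[of _ "x - y"]) (auto simp: T_def)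
qed

end


context ff
begin

lemma base:
  assumes d: "d > 0" "2*d dvd m"
    and z0: "z0 \<in> K (2*d)" "z0 \<noteq> 0" "z0 + z0 ^ (p^d) = 0"
    and mult: "\<And>x y. x \<in> K (2*d) \<Longrightarrow> y \<in> K (2*d) \<Longrightarrow> x \<noteq> 0 \<Longrightarrow> y \<noteq> 0 \<Longrightarrow> f (x * y) = f x * f y"
    and triv: "\<And>c. c \<in> K d \<Longrightarrow> c \<noteq> 0 \<Longrightarrow> f c = 1"
    and nontriv: "(\<Sum>x\<in>K (2*d) - {0}. f x) = 0"
  shows "Gd (2*d) f = of_nat (p^d) * f z0"
proof -
  have dm: "d dvd m" using d(2) by (metis dvd_mult_right)
  have sub: "K d \<subseteq> K (2*d)" by (rule K_mono) simp
  define A where "A = K (2*d) - {0}"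
  define C where "C = K d - {0}"
  define T where "T x = x + x ^ (p^d)" for x :: 'a
  have TK: "x \<in> K (2*d) \<Longrightarrow> T x \<in> K d" for x using K_2d_norm(1) by (simp add: T_def)
  have cC: "card C = p^d - 1" using card_K_nz[OF dm d(1)] by (simp add: C_def)
  have G1: "Gd (2*d) f = (\<Sum>x\<in>A. f x * psi d (T x))"
    unfolding Gd_def A_def T_def by (intro sum.cong refl) (auto simp: psi_trans)
  have step1: "Gd (2*d) f = (\<Sum>x\<in>A. f x * psi d (c * T x))" if c: "c \<in> C" for c
  proof -
    have cK: "c \<in> K d" "c \<noteq> 0" using c by (auto simp: C_def)
    have cK2: "c \<in> K (2*d)" using sub cK by auto
    have cL: "c ^ (p^d) = c" using cK(1) by (simp add: K_def)
    have "(\<Sum>x\<in>A. f x * psi d (T x)) = (\<Sum>y\<in>A. f (c * y) * psi d (T (c * y)))"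
      by (rule sum.reindex_bij_witness[of _ "\<lambda>y. c * y" "\<lambda>x. x / c"])
        (use cK cK2 in \<open>auto simp: A_def intro: K_mult K_divide\<close>)
    also have "\<dots> = (\<Sum>y\<in>A. f y * psi d (c * T y))"
    proof (rule sum.cong[OF refl])
      fix y assume y: "y \<in> A"
      have "f (c * y) = f c * f y" using y cK cK2 by (intro mult) (auto simp: A_def)
      then have "f (c * y) = f y" using triv[OF cK] by simp
      moreover have "T (c * y) = c * T y" by (simp add: T_def power_mult_distrib cL algebra_simps)
      ultimately show "f (c * y) * psi d (T (c * y)) = f y * psi d (c * T y)" by simp
    qed
    finally show ?thesis using G1 by simp
  qed
  have "of_nat (card C) * Gd (2*d) f = (\<Sum>c\<in>C. Gd (2*d) f)" by simp
  also have "\<dots> = (\<Sum>c\<in>C. \<Sum>x\<in>A. f x * psi d (c * T x))" using step1 by (intro sum.cong refl) auto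
  also have "\<dots> = (\<Sum>x\<in>A. f x * (\<Sum>c\<in>C. psi d (c * T x)))"
    by (subst sum.swap) (simp add: sum_distrib_left)
  also have "\<dots> = (\<Sum>x\<in>A. f x * (if T x = 0 then of_nat (p^d) - 1 else - 1))"
    unfolding C_def by (intro sum.cong refl) (auto simp: A_def psi_orth_nz[OF dm d(1)] TK)
  also have "\<dots> = (\<Sum>x\<in>A. f x * (if T x = 0 then of_nat (p^d) else 0) - f x)"
    by (intro sum.cong refl) (auto simp: algebra_simps)
  also have "\<dots> = (\<Sum>x\<in>A. f x * (if T x = 0 then of_nat (p^d) else 0)) - (\<Sum>x\<in>A. f x)"
    by (simp add: sum_subtractf)
  also have "\<dots> = (\<Sum>x\<in>A. f x * (if T x = 0 then of_nat (p^d) else 0))"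
    using nontriv by (simp add: A_def)
  also have "\<dots> = (\<Sum>x\<in>A. if T x = 0 then of_nat (p^d) * f x else 0)"
    by (intro sum.cong refl) auto
  also have "\<dots> = of_nat (p^d) * (\<Sum>x\<in>{x\<in>A. T x = 0}. f x)"
  proof -
    have fA: "finite A" by (simp add: A_def)
    show ?thesis by (simp add: sum.inter_filter[OF fA] sum_distrib_left if_distrib cong: if_cong)
  qed
  also have "(\<Sum>x\<in>{x\<in>A. T x = 0}. f x) = (\<Sum>c\<in>C. f (z0 * c))"
  proof (rule sum.reindex_bij_witness[of _ "\<lambda>c. z0 * c" "\<lambda>x. x / z0"])
    fix x assume x: "x \<in> {x\<in>A. T x = 0}"
    then have xK: "x \<in> K (2*d)" "x \<noteq> 0" "x ^ (p^d) = - x"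
      by (auto simp: A_def T_def eq_neg_iff_add_eq_0 add.commute)
    have z0L: "z0 ^ (p^d) = - z0" using z0(3) by (simp add: eq_neg_iff_add_eq_0 add.commute)
    show "z0 * (x / z0) = x" using z0(2) by simp
    have "(x / z0) ^ (p^d) = x / z0" using xK(3) z0L by (simp add: power_divide)
    then show "x / z0 \<in> C" using xK z0(2) by (auto simp: C_def K_def)
  next
    fix c assume c: "c \<in> C"
    then have cK: "c \<in> K d" "c \<noteq> 0" by (auto simp: C_def)
    have cL: "c ^ (p^d) = c" using cK(1) by (simp add: K_def)
    show "z0 * c / z0 = c" using z0(2) by simp
    have "z0 * c \<in> K (2*d)" using cK sub z0(1) by (auto intro: K_mult)
    moreover have "T (z0 * c) = c * (z0 + z0 ^ (p^d))"
      by (simp add: T_def power_mult_distrib cL algebra_simps)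
    ultimately show "z0 * c \<in> {x\<in>A. T x = 0}" using z0 cK by (auto simp: A_def)
  qed (use z0 in auto)
  also have "\<dots> = (\<Sum>c\<in>C. f z0)"
    using sub z0 by (intro sum.cong refl) (auto simp: C_def mult triv)
  also have "\<dots> = of_nat (card C) * f z0" by simp
  finally have "of_nat (card C) * Gd (2*d) f = of_nat (card C) * (of_nat (p^d) * f z0)" by simp
  moreover have "card C \<noteq> 0" using cC pd_ge2[OF d(1)] by simp
  ultimately show ?thesis by simp
qed

end


context ff
begin

lemma chi_pow: "x \<noteq> 0 \<Longrightarrow> chi (x ^ e) = chi x ^ e"
  by (induction e) (auto simp: chi_mult)

definition Fl :: "nat \<Rightarrow> nat \<Rightarrow> nat \<Rightarrow> nat \<Rightarrow> 'a \<Rightarrow> complex" where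
  "Fl k d0 l j x = chi x ^ (j * ((p ^ (d0 * 2^l) - 1) div k))"

lemma Fl_mult: "x \<noteq> 0 \<Longrightarrow> y \<noteq> 0 \<Longrightarrow> Fl k d0 l j (x * y) = Fl k d0 l j x * Fl k d0 l j y"
  by (simp add: Fl_def chi_mult power_mult_distrib)

lemma Fl_pow: "Fl k d0 l j x = Fl k d0 l 1 x ^ j"
  by (simp add: Fl_def power_mult[symmetric] mult.commute)

lemma norm_Fl [simp]: "norm (Fl k d0 l j x) = 1" by (simp add: Fl_def norm_power)

lemma sq_minus1: "(a::nat) * a - 1 = (a + 1) * (a - 1)"
  by (cases a) (simp_all add: algebra_simps)

lemma k_dvd_level:
  assumes "k dvd p^d0 + 1" "l > 0"
  shows "k dvd p ^ (d0 * 2^l) - 1"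
proof -
  have "p^(2*d0) = p^d0 * p^d0" by (simp add: mult_2 power_add)
  then have "p^(2*d0) - 1 = (p^d0 + 1) * (p^d0 - 1)" by (simp only: sq_minus1)
  then have "k dvd p^(2*d0) - 1" using assms(1) by (metis dvd_mult2)
  moreover have "p^(2*d0) - 1 dvd p ^ (d0 * 2^l) - 1"
  proof -
    obtain i where l: "l = Suc i" using assms(2) by (cases l) auto
    have "p ^ (d0 * 2^l) = (p^(2*d0)) ^ (2^i)" by (simp add: l power_mult[symmetric] mult_ac)
    then show ?thesis using nat_pow_minus1_dvd[of "p^(2*d0)" "2^i"] by simp
  qed
  ultimately show ?thesis by (rule dvd_trans)
qed

lemma Fl_norm_compat:
  assumes k: "k dvd p ^ (d0 * 2^l) - 1" and x: "x \<noteq> 0"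
  shows "Fl k d0 l j (x ^ (p ^ (d0 * 2^l) + 1)) = Fl k d0 (Suc l) j x"
proof -
  define L where "L = p ^ (d0 * 2^l)"
  have L2: "p ^ (d0 * 2^Suc l) = L * L" by (simp add: L_def power_mult[symmetric] mult_ac power2_eq_square
        flip: power_add mult_2)
  have L1: "L \<ge> 1" using p_ge2 by (simp add: L_def)
  have e: "(L + 1) * (j * ((L - 1) div k)) = j * ((L * L - 1) div k)"
  proof -
    obtain c where c: "L - 1 = k * c" using k by (auto simp: L_def)
    show ?thesis
    proof (cases "k = 0")
      case True then show ?thesis by simp
    next
      case False
      have d1: "(L - 1) div k = c" using c False by simp
      have "L * L - 1 = (L + 1) * (k * c)" by (simp only: sq_minus1 c)
      then have d2: "(L * L - 1) div k = (L + 1) * c" using False by simp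
      show ?thesis by (simp only: d1 d2 mult_ac)
    qed
  qed
  have "Fl k d0 l j (x ^ (L + 1)) = (chi x ^ (L + 1)) ^ (j * ((L - 1) div k))"
    unfolding Fl_def chi_pow[OF x] L_def by simp
  also have "\<dots> = chi x ^ (j * ((L * L - 1) div k))" by (simp only: power_mult[symmetric] e)
  also have "\<dots> = Fl k d0 (Suc l) j x" unfolding Fl_def L2 by simp
  finally show ?thesis by (simp add: L_def)
qed

lemma psum_gpow_K:
  assumes "d dvd m" "d > 0"
  shows "(\<Sum>x\<in>K d - {0}. h x) = (\<Sum>e<p^d-1. h (g ^ (((p^m-1) div (p^d-1)) * e)))"
  using K_nz_image[OF assms] by (simp add: sum.reindex)

end


locale semi = ff p m g for p m :: nat and g :: "'a::{finite,field}" +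
  fixes k d0 J :: nat
  assumes k_pos: "k > 0" and kd: "k dvd p^d0 + 1" and d0_pos: "d0 > 0"
    and J_pos: "J \<ge> 1" and mJ: "m = d0 * 2^J"
begin

lemma Dl_dvd: "l \<le> J \<Longrightarrow> d0 * 2^l dvd m"
  unfolding mJ by (simp add: le_imp_power_dvd)

lemma d0_dvd: "d0 dvd m" unfolding mJ by simp

lemma twod0_dvd: "2 * d0 dvd m" using Dl_dvd[of 1] J_pos by (simp add: mult.commute)

lemma Q2: "p ^ (d0 * 2) = p^d0 * p^d0" by (simp add: power_mult power2_eq_square)

lemma Fl1_eq: "Fl k d0 (Suc 0) j x = chi x ^ (j * ((p^d0 * p^d0 - 1) div k))"
  by (simp add: Fl_def Q2)

lemma level1_triv:
  assumes c: "c \<in> K d0" "c \<noteq> 0"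
  shows "Fl k d0 (Suc 0) j c = 1"
proof -
  define Q where "Q = p^d0"
  define w0 where "w0 = (p^m-1) div (Q-1)"
  have nw: "p^m - 1 = w0 * (Q - 1)" using pd_dvd[OF d0_dvd] by (simp add: w0_def Q_def)
  obtain e where e: "c = g ^ (w0 * e)" using K_nz_iff[OF d0_dvd d0_pos c(2)] c(1) by (auto simp: w0_def Q_def)
  obtain t where t: "Q + 1 = k * t" using kd by (auto simp: Q_def)
  have "(Q * Q - 1) div k = (Q - 1) * t"
  proof -
    have "Q * Q - 1 = k * ((Q - 1) * t)" by (simp only: sq_minus1 t mult_ac)
    then show ?thesis using k_pos by simp
  qed
  then have "Fl k d0 (Suc 0) j c = chi c ^ (j * ((Q - 1) * t))"
    unfolding Fl1_eq Q_def[symmetric] by simp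
  also have "\<dots> = (rou (p^m-1) ^ (w0 * e)) ^ (j * ((Q - 1) * t))" unfolding e chi_gpow by simp
  finally have "Fl k d0 (Suc 0) j c = rou (p^m-1) ^ (w0 * e * (j * ((Q - 1) * t)))"
    by (simp only: power_mult)
  also have "\<dots> = 1"
  proof -
    have "w0 * e * (j * ((Q - 1) * t)) = (p^m - 1) * (e * j * t)" unfolding nw by (simp add: mult_ac)
    then have "(p^m-1) dvd w0 * e * (j * ((Q - 1) * t))" by (metis dvd_triv_left)
    then show ?thesis using rou_pow_eq_1_iff[OF n_pos] by blast
  qed
  finally show ?thesis .
qed

lemma level1_nontriv:
  assumes j: "0 < j" "j < k"
  shows "(\<Sum>x\<in>K (2*d0) - {0}. Fl k d0 (Suc 0) j x) = 0"
proof -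
  define Q where "Q = p^d0"
  have Q1: "Q \<ge> 2" using pd_ge2[OF d0_pos] by (simp add: Q_def)
  have QQ: "p^(2*d0) = Q * Q" by (simp add: Q_def mult_2 power_add)
  define w1 where "w1 = (p^m-1) div (Q*Q-1)"
  have nw: "p^m - 1 = w1 * (Q*Q - 1)" using pd_dvd[OF twod0_dvd] by (simp add: w1_def QQ)
  obtain t where t: "Q * Q - 1 = k * t"
  proof -
    have "k dvd Q * Q - 1" using kd unfolding Q_def sq_minus1 by (metis dvd_mult2)
    then show ?thesis using that by blast
  qed
  have tdiv: "(Q * Q - 1) div k = t" using t k_pos by simp
  define z where "z = rou (p^m-1) ^ (w1 * (j * t))"
  have "(\<Sum>x\<in>K (2*d0) - {0}. Fl k d0 (Suc 0) j x) = (\<Sum>e<Q*Q-1. Fl k d0 (Suc 0) j (g ^ (w1 * e)))"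
    using psum_gpow_K[OF twod0_dvd] d0_pos by (simp add: QQ w1_def)
  also have "\<dots> = (\<Sum>e<Q*Q-1. z ^ e)"
  proof (rule sum.cong[OF refl])
    fix e
    have "Fl k d0 (Suc 0) j (g ^ (w1 * e)) = (rou (p^m-1) ^ (w1 * e)) ^ (j * t)"
      unfolding Fl1_eq Q_def[symmetric] tdiv chi_gpow by simp
    also have "\<dots> = z ^ e" unfolding z_def by (simp only: power_mult[symmetric] mult_ac)
    finally show "Fl k d0 (Suc 0) j (g ^ (w1 * e)) = z ^ e" .
  qed
  also have "\<dots> = 0"
  proof (rule geom_sum_root)
    have "w1 * (j * t) * (Q * Q - 1) = (p^m-1) * (j * t)" unfolding nw by (simp add: mult_ac)
    then have "(p^m-1) dvd w1 * (j * t) * (Q * Q - 1)" by (metis dvd_triv_left)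
    then show "z ^ (Q * Q - 1) = 1" unfolding z_def power_mult[symmetric]
      using rou_pow_eq_1_iff[OF n_pos] by blast
    have "\<not> (p^m-1) dvd w1 * (j * t)"
    proof
      assume "(p^m-1) dvd w1 * (j * t)"
      then obtain s where s: "w1 * (j * t) = (p^m-1) * s" by blast
      have "(p^m-1) * j = (p^m-1) * (s * k)"
      proof -
        have "(p^m-1) * j = w1 * (k * t) * j" unfolding nw t by simp
        also have "\<dots> = w1 * (j * t) * k" by (simp add: mult_ac)
        also have "\<dots> = (p^m-1) * s * k" unfolding s by simp
        also have "\<dots> = (p^m-1) * (s * k)" by (simp only: mult.assoc)
        finally show ?thesis .
      qed
      then have "j = s * k" using n_pos by simp
      then show False using j by (cases s) auto
    qed
    then show "z \<noteq> 1" unfolding z_def using rou_pow_eq_1_iff[OF n_pos] by simp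
  qed
  finally show ?thesis .
qed

end


context semi
begin

definition z0 :: 'a where "z0 = (SOME z. z \<in> K (2*d0) \<and> z \<noteq> 0 \<and> z + z ^ (p^d0) = 0)"

lemma z0: "z0 \<in> K (2*d0)" "z0 \<noteq> 0" "z0 + z0 ^ (p^d0) = 0"
proof -
  have "\<exists>z. z \<in> K (2*d0) \<and> z \<noteq> 0 \<and> z + z ^ (p^d0) = 0"
    using z0_ex[OF d0_pos twod0_dvd] by blast
  then have "z0 \<in> K (2*d0) \<and> z0 \<noteq> 0 \<and> z0 + z0 ^ (p^d0) = 0"
    unfolding z0_def by (rule someI_ex)
  then show "z0 \<in> K (2*d0)" "z0 \<noteq> 0" "z0 + z0 ^ (p^d0) = 0" by auto
qed

lemma level1_G:
  assumes j: "0 < j" "j < k"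
  shows "Gd (d0 * 2) (Fl k d0 (Suc 0) j) = of_nat (p^d0) * (Fl k d0 (Suc 0) (Suc 0) z0) ^ j"
proof -
  have "Gd (2 * d0) (Fl k d0 (Suc 0) j) = of_nat (p^d0) * Fl k d0 (Suc 0) j z0"
    by (rule base[OF d0_pos twod0_dvd z0]) (auto simp: Fl_mult level1_triv level1_nontriv[OF j])
  then show ?thesis by (simp add: mult.commute Fl_pow[of k d0 "Suc 0" j])
qed

lemma eta2: "(Fl k d0 (Suc 0) (Suc 0) z0) ^ 2 = 1"
proof -
  have zz: "z0 * z0 \<in> K d0"
  proof -
    have "z0 ^ (p^d0) = - z0" using z0(3) by (simp add: eq_neg_iff_add_eq_0 add.commute)
    then show ?thesis by (simp add: K_def power_mult_distrib)
  qed
  have "(Fl k d0 (Suc 0) (Suc 0) z0) ^ 2 = Fl k d0 (Suc 0) 1 (z0 * z0)" using Fl_mult z0(2) by (simp add: power2_eq_square)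
  also have "\<dots> = 1" using level1_triv[OF zz] z0(2) by simp
  finally show ?thesis .
qed

lemma step:
  assumes l: "1 \<le> l" "Suc l \<le> J"
  shows "Gd (d0 * 2^Suc l) (Fl k d0 (Suc l) j) = - (Gd (d0 * 2^l) (Fl k d0 l j) * Gd (d0 * 2^l) (Fl k d0 l j))"
proof -
  have dd: "2 * (d0 * 2^l) dvd m" using Dl_dvd[OF l(2)] by (simp add: mult_ac)
  have dpos: "d0 * 2^l > 0" using d0_pos by simp
  have kl: "k dvd p ^ (d0 * 2^l) - 1" using k_dvd_level[OF kd] l by simp
  have "Gd (2 * (d0 * 2^l)) (\<lambda>x. Fl k d0 l j (x ^ (p ^ (d0 * 2^l) + 1)))
      = - (Gd (d0 * 2^l) (Fl k d0 l j) * Gd (d0 * 2^l) (Fl k d0 l j))"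
    by (rule lift[OF dpos dd]) (simp add: Fl_mult)
  moreover have "Gd (2 * (d0 * 2^l)) (\<lambda>x. Fl k d0 l j (x ^ (p ^ (d0 * 2^l) + 1)))
      = Gd (d0 * 2^Suc l) (Fl k d0 (Suc l) j)"
  proof -
    have e2: "2 * (d0 * 2^l) = d0 * 2^Suc l" by simp
    show ?thesis unfolding Gd_def e2
    proof (rule sum.cong[OF refl])
      fix x assume "x \<in> K (d0 * 2^Suc l) - {0}"
      then have x0: "x \<noteq> 0" by simp
      show "Fl k d0 l j (x ^ (p ^ (d0 * 2^l) + 1)) * psi (d0 * 2^Suc l) x
          = Fl k d0 (Suc l) j x * psi (d0 * 2^Suc l) x"
        by (simp only: Fl_norm_compat[OF kl x0])
    qed
  qed
  ultimately show ?thesis by simp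
qed

lemma level2:
  assumes J2: "2 \<le> J" and j: "0 < j" "j < k"
  shows "Gd (d0 * 2^2) (Fl k d0 2 j) = - of_nat (p^(d0 * 2))"
proof -
  define eta where "eta = Fl k d0 (Suc 0) (Suc 0) z0"
  define A where "A = Gd (d0 * 2) (Fl k d0 (Suc 0) j)"
  have A: "A = of_nat (p^d0) * eta ^ j" using level1_G[OF j] by (simp add: A_def eta_def)
  have ee: "eta ^ j * eta ^ j = 1"
  proof -
    have "eta ^ j * eta ^ j = (eta ^ 2) ^ j" by (simp add: power2_eq_square power_mult_distrib)
    then show ?thesis using eta2 by (simp add: eta_def)
  qed
  have AA: "A * A = of_nat (p^d0) * of_nat (p^d0)"
  proof -
    have "A * A = of_nat (p^d0) * of_nat (p^d0) * (eta ^ j * eta ^ j)" by (simp add: A mult_ac)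
    then show ?thesis using ee by simp
  qed
  have "Gd (d0 * 2^Suc 1) (Fl k d0 (Suc 1) j) = - (Gd (d0 * 2^1) (Fl k d0 1 j) * Gd (d0 * 2^1) (Fl k d0 1 j))"
    using step[of 1] J2 by simp
  also have "Gd (d0 * 2^1) (Fl k d0 1 j) = A" by (simp add: A_def)
  finally have "Gd (d0 * 2^Suc 1) (Fl k d0 (Suc 1) j) = - (of_nat (p^d0) * of_nat (p^d0))"
    using AA by simp
  moreover have "(of_nat (p^d0) * of_nat (p^d0) :: complex) = of_nat (p^(d0 * 2))"
    by (simp add: power_mult power2_eq_square)
  ultimately show ?thesis by (simp add: numeral_2_eq_2)
qed

lemma levels:
  assumes "i + 2 \<le> J" and j: "0 < j" "j < k"
  shows "Gd (d0 * 2^(i+2)) (Fl k d0 (i+2) j) = - of_nat (p^(d0 * 2^(i+1)))"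
  using assms(1)
proof (induction i)
  case 0 then show ?case using level2[OF _ j] by (simp add: numeral_2_eq_2)
next
  case (Suc i)
  have "Gd (d0 * 2^Suc (i+2)) (Fl k d0 (Suc (i+2)) j)
      = - (Gd (d0 * 2^(i+2)) (Fl k d0 (i+2) j) * Gd (d0 * 2^(i+2)) (Fl k d0 (i+2) j))"
    using step[of "i+2"] Suc.prems by simp
  also have "\<dots> = - (of_nat (p^(d0 * 2^(i+1))) * of_nat (p^(d0 * 2^(i+1))))"
    using Suc by simp
  also have "\<dots> = - of_nat (p^(d0 * 2^(Suc i+1)))"
    by (simp flip: of_nat_mult power_add add: mult_2[symmetric] mult_ac)
  finally show ?case by simp
qed

lemma k_dvd_n: "k dvd p^m - 1"
  using k_dvd_level[OF kd, of J] J_pos mJ by simp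

lemma Fl_top: "Fl k d0 J j = fj k j"
proof -
  have "p ^ (d0 * 2^J) = p^m" using mJ by simp
  then show ?thesis by (simp add: Fl_def fj_def fun_eq_iff)
qed

lemma big_eig:
  "\<exists>b. b \<noteq> 0 \<and> (of_nat k * lam (kth_powers k) b = - 1 + of_nat (k - 1) * of_nat (p^(d0 * 2^(J-1)))
       \<or> of_nat k * lam (kth_powers k) b = - 1 - of_nat (k - 1) * of_nat (p^(d0 * 2^(J-1))))"
proof (cases "J = 1")
  case True
  define eta where "eta = Fl k d0 (Suc 0) (Suc 0) z0"
  have fz: "fj k j z0 = eta ^ j" for j
    using Fl_top[of j] Fl_pow[of k d0 "Suc 0" j z0] True by (simp add: eta_def)
  have Gj: "G (fj k j) = of_nat (p^d0) * eta ^ j" if "0 < j" "j < k" for j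
    using level1_G[OF that] Fl_top[of j] True Gd_top[of "fj k j"] mJ by (simp add: eta_def)
  have neta: "norm eta = 1" by (simp add: eta_def)
  have ce: "cnj (eta ^ j) * eta ^ j = 1" for j
    using complex_norm_square[of "eta ^ j"] neta by (simp add: norm_power mult.commute)
  have "of_nat k * lam (kth_powers k) z0 = (\<Sum>j<k. cnj (fj k j z0) * G (fj k j))"
    by (rule decomp[OF k_pos k_dvd_n z0(2)])
  also have "\<dots> = cnj (fj k 0 z0) * G (fj k 0) + (\<Sum>j\<in>{1..<k}. cnj (fj k j z0) * G (fj k j))"
    using k_pos by (simp add: lessThan_atLeast0 sum.atLeast_Suc_lessThan)
  also have "(\<Sum>j\<in>{1..<k}. cnj (fj k j z0) * G (fj k j)) = (\<Sum>j\<in>{1..<k}. of_nat (p^d0))"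
  proof (intro sum.cong refl)
    fix j assume "j \<in> {1..<k}"
    then have "0 < j" "j < k" by auto
    then show "cnj (fj k j z0) * G (fj k j) = of_nat (p^d0)"
      using Gj ce[of j] by (simp add: fz mult_ac)
  qed
  also have "cnj (fj k 0 z0) * G (fj k 0) = - 1" using G_f0 by (simp add: fj_def)
  finally have "of_nat k * lam (kth_powers k) z0 = - 1 + of_nat (k - 1) * of_nat (p^(d0 * 2^(J-1)))"
    using True by simp
  then show ?thesis using z0(2) by blast
next
  case False
  then have J2: "2 \<le> J" using J_pos by simp
  obtain i where i: "J = i + 2" using J2 by (metis add.commute le_Suc_ex)
  have Gj: "G (fj k j) = - of_nat (p^(d0 * 2^(J-1)))" if "0 < j" "j < k" for j
    using levels[of i j] that i Fl_top[of j] Gd_top[of "fj k j"] mJ by simp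
  have f1: "fj k j 1 = 1" for j by (simp add: fj_def)
  have "of_nat k * lam (kth_powers k) 1 = (\<Sum>j<k. cnj (fj k j 1) * G (fj k j))"
    by (rule decomp[OF k_pos k_dvd_n]) simp
  also have "\<dots> = cnj (fj k 0 1) * G (fj k 0) + (\<Sum>j\<in>{1..<k}. cnj (fj k j 1) * G (fj k j))"
    using k_pos by (simp add: lessThan_atLeast0 sum.atLeast_Suc_lessThan)
  also have "(\<Sum>j\<in>{1..<k}. cnj (fj k j 1) * G (fj k j)) = (\<Sum>j\<in>{1..<k}. - of_nat (p^(d0 * 2^(J-1))))"
    by (intro sum.cong refl) (auto simp: f1 Gj)
  also have "cnj (fj k 0 1) * G (fj k 0) = - 1" using G_f0 by (simp add: fj_def)
  finally have "of_nat k * lam (kth_powers k) 1 = - 1 - of_nat (k - 1) * of_nat (p^(d0 * 2^(J-1)))"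
    by simp
  then show ?thesis using one_neq_zero by blast
qed

end


context ff
begin

lemma psi_top_orth: "(\<Sum>b\<in>UNIV. psi m (b * t)) = (if t = 0 then of_nat (p ^ m) else 0)"
  using psi_orth[of m t] K_top m_pos by simp

lemma psi_top_add: "psi m (x + y) = psi m x * psi m y"
  using psi_add[of x m y] K_top by simp

lemma psi_top_neg: "psi m (- x) = cnj (psi m x)"
  using psi_neg[of x m] K_top by simp

lemma cayley_nbr_sum:
  fixes u :: 'a and S :: "'a set" and v :: "'a \<Rightarrow> complex"
  shows "(\<Sum>w\<in>{w. w - u \<in> S}. v w) = (\<Sum>s\<in>S. v (u + s))"
  by (rule sum.reindex_bij_witness[of _ "\<lambda>s. u + s" "\<lambda>w. w - u"]) auto

lemma cayley_eig_is_lam: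
  fixes S :: "'a set"
  assumes "adj_eigenvalue (\<lambda>u w. w - u \<in> S) mu"
  shows "\<exists>b. mu = lam S b"
proof -
  obtain v :: "'a \<Rightarrow> complex" where v0: "v \<noteq> (\<lambda>_. 0)"
    and ev: "\<And>u. (\<Sum>w\<in>{w. w - u \<in> S}. v w) = mu * v u"
    using assms unfolding adj_eigenvalue_def by blast
  have ev': "(\<Sum>s\<in>S. v (u + s)) = mu * v u" for u using ev[of u] cayley_nbr_sum by simp
  define vh where "vh b = (\<Sum>x\<in>UNIV. v x * psi m (- (b * x)))" for b
  have key: "mu * vh b = lam S b * vh b" for b
  proof -
    have "mu * vh b = (\<Sum>x\<in>UNIV. (\<Sum>s\<in>S. v (x + s)) * psi m (- (b * x)))"
      by (simp add: vh_def ev' sum_distrib_left mult_ac)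
    also have "\<dots> = (\<Sum>s\<in>S. \<Sum>x\<in>UNIV. v (x + s) * psi m (- (b * x)))"
      by (simp add: sum_distrib_right sum.swap[of _ UNIV S])
    also have "\<dots> = (\<Sum>s\<in>S. \<Sum>y\<in>UNIV. v y * psi m (- (b * (y - s))))"
    proof (rule sum.cong[OF refl])
      fix s
      show "(\<Sum>x\<in>UNIV. v (x + s) * psi m (- (b * x))) = (\<Sum>y\<in>UNIV. v y * psi m (- (b * (y - s))))"
        by (rule sum.reindex_bij_witness[of _ "\<lambda>y. y - s" "\<lambda>x. x + s"]) auto
    qed
    also have "\<dots> = (\<Sum>s\<in>S. psi m (b * s) * vh b)"
    proof (rule sum.cong[OF refl])
      fix s
      have "psi m (- (b * (y - s))) = psi m (b * s) * psi m (- (b * y))" for y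
        using psi_top_add[of "b * s" "- (b * y)"] by (simp add: algebra_simps)
      then show "(\<Sum>y\<in>UNIV. v y * psi m (- (b * (y - s)))) = psi m (b * s) * vh b"
        by (simp add: vh_def sum_distrib_left mult_ac)
    qed
    also have "\<dots> = lam S b * vh b" by (simp add: lam_def sum_distrib_right)
    finally show ?thesis .
  qed
  have inv: "(\<Sum>b\<in>UNIV. vh b * psi m (b * u)) = of_nat (p ^ m) * v u" for u
  proof -
    have "(\<Sum>b\<in>UNIV. vh b * psi m (b * u)) = (\<Sum>x\<in>UNIV. v x * (\<Sum>b\<in>UNIV. psi m (b * (u - x))))"
    proof -
      have "psi m (- (b * x)) * psi m (b * u) = psi m (b * (u - x))" for b x
        using psi_top_add[of "- (b * x)" "b * u"] by (simp add: algebra_simps)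
      then have "(\<Sum>b\<in>UNIV. vh b * psi m (b * u)) = (\<Sum>b\<in>UNIV. \<Sum>x\<in>UNIV. v x * psi m (b * (u - x)))"
        unfolding vh_def sum_distrib_right by (simp add: mult.assoc)
      also have "\<dots> = (\<Sum>x\<in>UNIV. \<Sum>b\<in>UNIV. v x * psi m (b * (u - x)))" by (rule sum.swap)
      also have "\<dots> = (\<Sum>x\<in>UNIV. v x * (\<Sum>b\<in>UNIV. psi m (b * (u - x))))"
        by (simp add: sum_distrib_left)
      finally show ?thesis .
    qed
    also have "\<dots> = (\<Sum>x\<in>UNIV. if x = u then v x * of_nat (p ^ m) else 0)"
      by (intro sum.cong refl) (auto simp: psi_top_orth)
    also have "\<dots> = of_nat (p ^ m) * v u" by simp
    finally show ?thesis .
  qed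
  obtain u where "v u \<noteq> 0" using v0 by auto
  then have "(\<Sum>b\<in>UNIV. vh b * psi m (b * u)) \<noteq> 0" using inv[of u] p_pos by simp
  then obtain b where "vh b \<noteq> 0" by (metis (no_types, lifting) mult_eq_0_iff sum.neutral)
  then show ?thesis using key[of b] by (intro exI[of _ b]) simp
qed

lemma cayley_lam_is_eig:
  fixes S :: "'a set"
  shows "adj_eigenvalue (\<lambda>u w. w - u \<in> S) (lam S b)"
proof -
  define v where "v x = psi m (b * x)" for x
  have "v \<noteq> (\<lambda>_. 0)"
  proof
    assume "v = (\<lambda>_. 0)"
    then have "v 0 = 0" by simp
    then show False by (simp add: v_def)
  qed
  moreover have "(\<Sum>w\<in>{w. w - u \<in> S}. v w) = lam S b * v u" for u
  proof -
    have "(\<Sum>w\<in>{w. w - u \<in> S}. v w) = (\<Sum>s\<in>S. v (u + s))" by (rule cayley_nbr_sum)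
    also have "\<dots> = (\<Sum>s\<in>S. psi m (b * u) * psi m (b * s))"
      by (simp add: v_def distrib_left psi_top_add)
    also have "\<dots> = lam S b * v u" by (simp add: lam_def v_def sum_distrib_left mult.commute)
    finally show ?thesis .
  qed
  ultimately show ?thesis unfolding adj_eigenvalue_def by blast
qed

lemma cayley_regular:
  fixes S :: "'a set"
  shows "regular_graph (\<lambda>u w. w - u \<in> S) (card S)"
proof -
  have "card {w. w - u \<in> S} = card S" for u
    by (rule bij_betw_same_card[of "\<lambda>w. w - u"]) (rule bij_betw_byWitness[of _ "\<lambda>s. s + u"], auto)
  then show ?thesis by (simp add: regular_graph_def)
qed

lemma lam_0: "lam S 0 = of_nat (card S)" by (simp add: lam_def)

lemma lam_compl:
  assumes "b \<noteq> 0" "R \<subseteq> UNIV - {0}"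
  shows "lam (UNIV - {0} - R) b = - 1 - lam R b"
proof -
  have "lam (UNIV - {0}) b = lam R b + lam (UNIV - {0} - R) b"
    unfolding lam_def using assms(2) by (metis add.commute finite sum.subset_diff)
  moreover have "lam (UNIV - {0}) b = - 1"
    using psi_top_orth_nz[of b] assms(1) by (simp add: lam_def mult.commute)
  ultimately show ?thesis by (simp add: algebra_simps eq_diff_eq)
qed

end


context ff
begin

lemma reach_shift:
  fixes S :: "'a set"
  assumes "(\<lambda>u w. w - u \<in> S)\<^sup>*\<^sup>* a b"
  shows "(\<lambda>u w. w - u \<in> S)\<^sup>*\<^sup>* (a + c) (b + c)"
  using assms
proof (induction rule: rtranclp_induct)
  case base then show ?case by simp
next
  case (step y z)
  have "(z + c) - (y + c) \<in> S" using step(2) by simp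
  then show ?case using step(3) by (simp add: rtranclp.rtrancl_into_rtrancl)
qed

lemma reach_add:
  fixes S :: "'a set"
  assumes "(\<lambda>u w. w - u \<in> S)\<^sup>*\<^sup>* 0 x" "(\<lambda>u w. w - u \<in> S)\<^sup>*\<^sup>* 0 y"
  shows "(\<lambda>u w. w - u \<in> S)\<^sup>*\<^sup>* 0 (x + y)"
proof -
  have "(\<lambda>u w. w - u \<in> S)\<^sup>*\<^sup>* (0 + x) (y + x)" by (rule reach_shift[OF assms(2)])
  then show ?thesis using assms(1) by (simp add: add.commute)
qed

lemma reach_S:
  fixes S :: "'a set"
  shows "s \<in> S \<Longrightarrow> (\<lambda>u w. w - u \<in> S)\<^sup>*\<^sup>* 0 s"
  by (rule r_into_rtranclp) simp

lemma connected_from0: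
  fixes S :: "'a set"
  assumes "\<And>x. (\<lambda>u w. w - u \<in> S)\<^sup>*\<^sup>* 0 x"
  shows "connected_graph (\<lambda>u w. w - u \<in> S)"
  unfolding connected_graph_def
proof (intro allI)
  fix u v :: 'a
  have "(\<lambda>u w. w - u \<in> S)\<^sup>*\<^sup>* (0 + u) ((v - u) + u)" by (rule reach_shift[OF assms])
  then show "(\<lambda>u w. w - u \<in> S)\<^sup>*\<^sup>* u v" by simp
qed

lemma connected_big:
  fixes S :: "'a set"
  assumes "2 * card (insert 0 S) > p ^ m"
  shows "connected_graph (\<lambda>u w. w - u \<in> S)"
proof (rule connected_from0)
  fix x :: 'a
  define A where "A = insert 0 S"
  define B where "B = (\<lambda>a. x - a) ` A"
  have "inj_on (\<lambda>a. x - a) A" by (rule inj_onI) simp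
  then have cB: "card B = card A" by (simp add: B_def card_image)
  have "A \<inter> B \<noteq> {}"
  proof
    assume "A \<inter> B = {}"
    then have "card (A \<union> B) = card A + card B" by (simp add: card_Un_disjoint)
    moreover have "card (A \<union> B) \<le> p ^ m" using card_q card_mono[of UNIV "A \<union> B"] by simp
    ultimately show False using assms cB by (simp add: A_def)
  qed
  then obtain a a' where a: "a \<in> A" "a' \<in> A" "a = x - a'" by (auto simp: B_def)
  have r: "(\<lambda>u w. w - u \<in> S)\<^sup>*\<^sup>* 0 y" if "y \<in> A" for y
    using that reach_S by (auto simp: A_def)
  have "x = a + a'" using a(3) by simp
  then show "(\<lambda>u w. w - u \<in> S)\<^sup>*\<^sup>* 0 x" using reach_add[OF r[OF a(1)] r[OF a(2)]] by simp
qed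

lemma kth_mult:
  assumes "x \<in> kth_powers k" "y \<in> kth_powers k"
  shows "x * y \<in> (kth_powers k :: 'a set)"
proof -
  obtain a where a: "a \<noteq> 0" "x = a ^ k" using assms(1) by (auto simp: kth_powers_def)
  obtain b where b: "b \<noteq> 0" "y = b ^ k" using assms(2) by (auto simp: kth_powers_def)
  have "x * y = (a * b) ^ k" using a b by (simp add: power_mult_distrib)
  moreover have "a * b \<noteq> 0" using a b by simp
  ultimately show ?thesis by (auto simp: kth_powers_def)
qed

lemma connected_R:
  assumes k: "k > 0" "k dvd p^m - 1"
    and big: "\<not> ((p^m - 1) div k + 1) * ((p^m - 1) div k + 1) \<le> p ^ m"
  shows "connected_graph (gpaley k :: 'a \<Rightarrow> 'a \<Rightarrow> bool)"
proof -
  define R where "R = (kth_powers k :: 'a set)"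
  define E where "E = (\<lambda>u w. w - u \<in> R)"
  have gE: "gpaley k = E" by (simp add: gpaley_def E_def R_def fun_eq_iff)
  define C where "C = {x. E\<^sup>*\<^sup>* 0 x}"
  have C0: "0 \<in> C" by (simp add: C_def)
  have Cadd: "x \<in> C \<Longrightarrow> y \<in> C \<Longrightarrow> x + y \<in> C" for x y
    unfolding C_def E_def using reach_add by blast
  have RC: "R \<subseteq> C" unfolding C_def E_def using reach_S by blast
  have RmC: "r * c \<in> C" if r: "r \<in> R" and c: "c \<in> C" for r c
  proof -
    have "E\<^sup>*\<^sup>* 0 c" using c by (simp add: C_def)
    then show ?thesis
    proof (induction rule: rtranclp_induct)
      case base then show ?case by (simp add: C0)
    next
      case (step y z)
      have "r * (z - y) \<in> R" using step(2) r kth_mult by (auto simp: E_def R_def)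
      then have "r * y + r * (z - y) \<in> C" using step(3) RC Cadd by blast
      then show ?case by (simp add: algebra_simps)
    qed
  qed
  have CmC: "c * x \<in> C" if c: "c \<in> C" and x: "x \<in> C" for c x
  proof -
    have "E\<^sup>*\<^sup>* 0 c" using c by (simp add: C_def)
    then show ?thesis
    proof (induction rule: rtranclp_induct)
      case base then show ?case by (simp add: C0)
    next
      case (step y z)
      have "(z - y) * x \<in> C" using step(2) RmC x by (auto simp: E_def)
      then have "y * x + (z - y) * x \<in> C" using step(3) Cadd by blast
      then show ?case by (simp add: algebra_simps)
    qed
  qed
  have one_R: "1 \<in> R" by (auto simp: R_def kth_powers_def intro: exI[of _ 1])
  have C1: "1 \<in> C" using one_R RC by auto
  have Cnat: "of_nat j * x \<in> C" if "x \<in> C" for j x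
  proof (induction j)
    case 0 then show ?case by (simp add: C0)
  next
    case (Suc j)
    have "of_nat j * x + x \<in> C" using Cadd[OF Suc that] .
    then show ?case by (simp add: distrib_right add.commute)
  qed
  have Cneg: "- x \<in> C" if "x \<in> C" for x
  proof -
    have "(of_nat p :: 'a) = 0" using char_p by (metis of_nat_CHAR)
    moreover have "(of_nat (p - 1) :: 'a) + 1 = of_nat p"
    proof -
      have "p - 1 + 1 = p" using p_ge2 by simp
      then show ?thesis by (metis of_nat_1 of_nat_add)
    qed
    ultimately have "(of_nat (p - 1) :: 'a) = - 1" by (simp add: eq_neg_iff_add_eq_0)
    then have "- x = of_nat (p - 1) * x" by simp
    then show ?thesis using Cnat[OF that] by simp
  qed
  have Cpow: "x ^ j \<in> C" if "x \<in> C" for x j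
    by (induction j) (auto simp: C1 intro: CmC that)
  have Cinv: "inverse x \<in> C" if "x \<in> C" "x \<noteq> 0" for x
  proof -
    have e: "p^m - 1 = Suc (p^m - 2)" using q_ge2 by simp
    have "x * x ^ (p^m - 2) = 1" using pow_n[OF that(2)] unfolding e by simp
    then have "inverse x = x ^ (p^m - 2)" by (simp add: inverse_unique)
    then show ?thesis using Cpow[OF that(1)] by simp
  qed
  show ?thesis
  proof (cases "C = UNIV")
    case True
    then show ?thesis unfolding gE E_def by (intro connected_from0) (auto simp: C_def E_def)
  next
    case False
    then obtain al where al: "al \<notin> C" by auto
    have inj: "inj_on (\<lambda>(a, b). a + b * al) (C \<times> C)"
    proof (rule inj_onI, clarsimp)
      fix a b a' b' assume ab: "a \<in> C" "b \<in> C" "a' \<in> C" "b' \<in> C" and e: "a + b * al = a' + b' * al"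
      show "a = a' \<and> b = b'"
      proof (cases "b = b'")
        case True then show ?thesis using e by simp
      next
        case False
        have "al * (b - b') = a' - a" using e by (simp add: algebra_simps)
        then have "al = (a' - a) / (b - b')" using False by (simp add: eq_divide_eq)
        moreover have "(a' - a) / (b - b') \<in> C"
        proof -
          have "a' + - a \<in> C" using Cadd Cneg ab by blast
          moreover have "b + - b' \<in> C" using Cadd Cneg ab by blast
          moreover have "b + - b' \<noteq> 0" using False by (simp add: add_eq_0_iff2)
          ultimately have "(a' + - a) * inverse (b + - b') \<in> C" using CmC Cinv by blast
          then show ?thesis by (simp add: divide_inverse)
        qed
        ultimately show ?thesis using al by simp
      qed
    qed
    have "card (C \<times> C) \<le> p ^ m"
      using card_image[OF inj] card_mono[of UNIV "(\<lambda>(a, b). a + b * al) ` (C \<times> C)"] card_q by simp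
    then have cC: "card C * card C \<le> p ^ m" by (simp add: card_cartesian_product)
    have "insert 0 R \<subseteq> C" using RC C0 by auto
    then have "card (insert 0 R) \<le> card C" by (intro card_mono) auto
    moreover have "card (insert 0 R) = (p^m - 1) div k + 1"
      using card_R[OF k] by (simp add: R_def kth_powers_def)
    ultimately have le: "(p^m - 1) div k + 1 \<le> card C" by simp
    have "((p^m - 1) div k + 1) * ((p^m - 1) div k + 1) \<le> card C * card C"
      using mult_le_mono[OF le le] .
    then show ?thesis using cC big by linarith
  qed
qed

end


lemma odd_pow_plus1_dvd:
  fixes x :: nat
  shows "x + 1 dvd x ^ (2 * i + 1) + 1"
proof (induction i)
  case 0 then show ?case by simp
next
  case (Suc i)
  show ?case
  proof (cases "x = 0")
    case True then show ?thesis by simp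
  next
    case False
    have e: "x ^ (2 * Suc i + 1) + 1 = x * x * (x ^ (2 * i + 1) + 1) - (x * x - 1)"
    proof -
      have "x * x \<ge> 1" using False by (simp add: Suc_le_eq)
      moreover have "x ^ (2 * Suc i + 1) = x * x * x ^ (2 * i + 1)" by (simp add: power_add mult_ac)
      ultimately show ?thesis by (simp add: algebra_simps)
    qed
    have "x + 1 dvd x * x - 1"
    proof -
      have e: "x * x - 1 = (x + 1) * (x - 1)" by (cases x) (simp_all add: algebra_simps)
      show ?thesis unfolding e by (rule dvd_triv_left)
    qed
    moreover have "x + 1 dvd x * x * (x ^ (2 * i + 1) + 1)" using Suc.IH by (rule dvd_mult)
    ultimately show ?thesis unfolding e by (rule dvd_diff_nat[rotated])
  qed
qed

lemma two_odd_decomp: "(r::nat) > 0 \<Longrightarrow> \<exists>e od. r = 2^e * od \<and> odd od"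
proof (induction r rule: less_induct)
  case (less r)
  show ?case
  proof (cases "odd r")
    case True then show ?thesis by (intro exI[of _ 0] exI[of _ r]) simp
  next
    case False
    then obtain r' where r: "r = 2 * r'" by blast
    then have "r' < r" "r' > 0" using less.prems by auto
    then obtain e od where "r' = 2^e * od" "odd od" using less.IH by blast
    then show ?thesis using r by (intro exI[of _ "Suc e"] exI[of _ od]) simp
  qed
qed

lemma nt_chain:
  fixes p k t s :: nat
  assumes "t > 0" "t dvd s" "s > 0" "k dvd p^t + 1"
  shows "\<exists>d0 J. d0 > 0 \<and> J \<ge> 1 \<and> 2 * s = d0 * 2^J \<and> k dvd p^d0 + 1"
proof -
  obtain r where r: "s = t * r" using assms(2) by blast
  then have "r > 0" using assms(3) by (cases r) auto
  then obtain e od where eo: "r = 2^e * od" "odd od" using two_odd_decomp by blast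
  obtain i where i: "od = 2 * i + 1" using eo(2) oddE by blast
  have "p^t + 1 dvd (p^t) ^ od + 1" unfolding i using odd_pow_plus1_dvd[of "p^t" i] by simp
  then have "k dvd p^(t * od) + 1" using assms(4) by (simp add: power_mult dvd_trans)
  moreover have "2 * s = (t * od) * 2^(Suc e)" using r eo by (simp add: mult_ac)
  moreover have "t * od > 0" using assms(1) eo(2) by (cases od) auto
  ultimately show ?thesis by (intro exI[of _ "t * od"] exI[of _ "Suc e"]) auto
qed

lemma nt_k_le:
  fixes p k t s :: nat
  assumes "prime p" "t > 0" "t dvd s" "s > 0" "k dvd p^t + 1" "k \<noteq> p^s + 1"
  shows "k \<le> p^s"
proof -
  have "k \<le> p^t + 1" using assms(5) by (rule dvd_imp_le) simp
  moreover have "p^t \<le> p^s" using assms prime_gt_1_nat[OF assms(1)]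
    by (intro power_increasing) (auto dest: dvd_imp_le)
  ultimately show ?thesis using assms(6) by linarith
qed

lemma pow_mod_1: "(a::nat) mod n = 1 \<Longrightarrow> n > 1 \<Longrightarrow> a ^ t mod n = 1"
  by (metis mod_if power_mod power_one)

lemma modp1: "(x::nat) mod n = 1 \<Longrightarrow> n > 2 \<Longrightarrow> (x + 1) mod n \<noteq> 0"
proof -
  assume a: "x mod n = 1" "n > 2"
  have "(x + 1) mod n = (x mod n + 1) mod n" by (simp add: mod_Suc_eq)
  then show ?thesis using a by simp
qed

lemma four_pow_mod5: "(4::nat) ^ i mod 5 = 1 \<or> (4::nat) ^ i mod 5 = 4"
proof (induction i)
  case 0 then show ?case by simp
next
  case (Suc i)
  have "(4::nat) ^ Suc i mod 5 = (4 * (4 ^ i mod 5)) mod 5" by (simp add: mod_mult_right_eq)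
  then show ?case using Suc by auto
qed

lemma nt_conds:
  fixes p m t k :: nat
  assumes p: "prime p" and m: "m > 0" "even m" and t: "t > 0" "t dvd m div 2"
    and k: "k > 2" "k dvd p^t + 1" "k \<noteq> p^(m div 2) + 1"
  shows "(k \<le> 5) \<longleftrightarrow>
           ((k = 3 \<and> p = 2 \<and> m \<ge> 4) \<or>
              (k = 3 \<and> p \<noteq> 2 \<and> p mod 3 = 2 \<and> m \<ge> 2) \<or>
              (k = 4 \<and> p = 3 \<and> m \<ge> 4) \<or>
              (k = 4 \<and> p \<noteq> 3 \<and> p mod 4 = 3 \<and> m \<ge> 2) \<or>
              (k = 5 \<and> p = 2 \<and> m \<ge> 8 \<and> 4 dvd m) \<or>
              (k = 5 \<and> p \<noteq> 2 \<and> (p mod 5 = 2 \<or> p mod 5 = 3) \<and> m \<ge> 4 \<and> 4 dvd m) \<or>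
              (k = 5 \<and> p mod 5 = 4 \<and> m \<ge> 2))"
proof
  assume k5: "k \<le> 5"
  have m2: "m \<ge> 2" using m by (auto elim!: evenE)
  have m2s: "m = 2 \<Longrightarrow> t = 1" using t by simp
  have pt: "(p^t + 1) mod k = 0" using k(2) by simp
  have p2: "p \<ge> 2" using prime_ge_2_nat[OF p] .
  have pmod: "(p mod n) ^ t mod n = p ^ t mod n" for n by (simp add: power_mod)
  consider "k = 3" | "k = 4" | "k = 5" using k5 k(1) by linarith
  then show "(k = 3 \<and> p = 2 \<and> m \<ge> 4) \<or>
              (k = 3 \<and> p \<noteq> 2 \<and> p mod 3 = 2 \<and> m \<ge> 2) \<or>
              (k = 4 \<and> p = 3 \<and> m \<ge> 4) \<or>
              (k = 4 \<and> p \<noteq> 3 \<and> p mod 4 = 3 \<and> m \<ge> 2) \<or>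
              (k = 5 \<and> p = 2 \<and> m \<ge> 8 \<and> 4 dvd m) \<or>
              (k = 5 \<and> p \<noteq> 2 \<and> (p mod 5 = 2 \<or> p mod 5 = 3) \<and> m \<ge> 4 \<and> 4 dvd m) \<or>
              (k = 5 \<and> p mod 5 = 4 \<and> m \<ge> 2)"
  proof cases
    case 1
    have "p mod 3 = 2"
    proof -
      have "p mod 3 \<noteq> 0"
      proof
        assume "p mod 3 = 0"
        then have "p = 3" using p by (metis dvd_eq_mod_eq_0 prime_nat_iff numeral_eq_one_iff semiring_norm(86))
        then show False using pt 1 t(1) by (simp add: mod_Suc)
      qed
      moreover have "p mod 3 \<noteq> 1"
      proof
        assume "p mod 3 = 1"
        then have "p^t mod 3 = 1" using pow_mod_1 by simp
        then show False using pt 1 modp1[of "p^t" 3] by simp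
      qed
      ultimately show ?thesis by linarith
    qed
    moreover have "p = 2 \<Longrightarrow> m \<ge> 4"
    proof (rule ccontr)
      assume "p = 2" "\<not> m \<ge> 4"
      then have "m = 2" using m m2 by presburger
      then show False using m2s k(3) 1 \<open>p = 2\<close> by simp
    qed
    ultimately show ?thesis using 1 m2 by auto
  next
    case 2
    have "p mod 4 = 3"
    proof -
      have "odd p"
      proof
        assume "even p"
        then have "even (p^t)" using t(1) by simp
        then have "odd (p^t + 1)" by simp
        moreover have "even (p^t + 1)" using k(2) 2 by (metis dvd_trans even_numeral)
        ultimately show False by simp
      qed
      then have "p mod 4 = 1 \<or> p mod 4 = 3" by presburger
      moreover have "p mod 4 \<noteq> 1"
      proof
        assume "p mod 4 = 1"
        then have "p^t mod 4 = 1" using pow_mod_1 by simp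
        then show False using pt 2 modp1[of "p^t" 4] by simp
      qed
      ultimately show ?thesis by simp
    qed
    moreover have "p = 3 \<Longrightarrow> m \<ge> 4"
    proof (rule ccontr)
      assume "p = 3" "\<not> m \<ge> 4"
      then have "m = 2" using m m2 by presburger
      then show False using m2s k(3) 2 \<open>p = 3\<close> by simp
    qed
    ultimately show ?thesis using 2 m2 by auto
  next
    case 3
    have pt5: "p^t mod 5 = 4" using pt 3 by presburger
    have "p mod 5 \<noteq> 0"
    proof
      assume "p mod 5 = 0"
      then have "p^t mod 5 = 0" using t(1) by (metis pmod power_0_left not_gr0 mod_0)
      then show False using pt5 by simp
    qed
    moreover have "p mod 5 \<noteq> 1"
    proof
      assume "p mod 5 = 1"
      then have "p^t mod 5 = 1" using pow_mod_1 by simp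
      then show False using pt5 by simp
    qed
    ultimately consider "p mod 5 = 4" | "p mod 5 = 2 \<or> p mod 5 = 3" by linarith
    then show ?thesis
    proof cases
      case 1 then show ?thesis using 3 m2 by auto
    next
      case 2
      have "even t"
      proof (rule ccontr)
        assume "odd t"
        then obtain i where i: "t = 2 * i + 1" using oddE by blast
        have "p^2 mod 5 = 4"
        proof -
          have "p^2 mod 5 = (p mod 5)^2 mod 5" by (simp add: power_mod)
          then show ?thesis using 2 by auto
        qed
        have pa: "p^t = p * (p^2)^i" by (simp add: i power_add power_mult[symmetric] mult.commute)
        have pb: "(p * (p^2)^i) mod 5 = (p * ((p^2)^i mod 5)) mod 5" by (simp add: mod_mult_right_eq)
        have pc: "(p^2)^i mod 5 = (p^2 mod 5)^i mod 5" by (simp add: power_mod)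
        have "p^t mod 5 = (p * (p^2 mod 5)^i) mod 5"
          unfolding pa pb pc by (simp add: mod_mult_right_eq)
        also have "\<dots> = (p * 4^i) mod 5" using \<open>p^2 mod 5 = 4\<close> by simp
        also have "\<dots> = ((p mod 5) * (4^i mod 5)) mod 5" by (simp add: mod_mult_eq)
        finally have "p^t mod 5 = ((p mod 5) * (4^i mod 5)) mod 5" .
        then show False using pt5 2 four_pow_mod5[of i] by auto
      qed
      then have "2 dvd m div 2" using t(2) by (metis dvd_trans)
      then have m4: "4 dvd m" using m(2) by (metis dvd_mult_div_cancel mult_dvd_mono dvd_refl
            numeral_Bit0 mult_2)
      then have m4': "m \<ge> 4" using m(1) by (simp add: dvd_imp_le)
      have "p = 2 \<Longrightarrow> m \<ge> 8"
      proof (rule ccontr)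
        assume "p = 2" "\<not> m \<ge> 8"
        then have "m = 4" using m4 m4' by (auto elim!: dvdE)
        then have "t = 1 \<or> t = 2" using t by (auto dest!: dvd_imp_le)
        then have "t = 2" using \<open>even t\<close> by auto
        then show False using k(3) 3 \<open>p = 2\<close> \<open>m = 4\<close> by simp
      qed
      then show ?thesis using 2 3 m4 m4' by auto
    qed
  qed
next
  assume "(k = 3 \<and> p = 2 \<and> m \<ge> 4) \<or>
              (k = 3 \<and> p \<noteq> 2 \<and> p mod 3 = 2 \<and> m \<ge> 2) \<or>
              (k = 4 \<and> p = 3 \<and> m \<ge> 4) \<or>
              (k = 4 \<and> p \<noteq> 3 \<and> p mod 4 = 3 \<and> m \<ge> 2) \<or>
              (k = 5 \<and> p = 2 \<and> m \<ge> 8 \<and> 4 dvd m) \<or>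
              (k = 5 \<and> p \<noteq> 2 \<and> (p mod 5 = 2 \<or> p mod 5 = 3) \<and> m \<ge> 4 \<and> 4 dvd m) \<or>
              (k = 5 \<and> p mod 5 = 4 \<and> m \<ge> 2)"
  then show "k \<le> 5" by auto
qed



lemma sqrt_bound:
  fixes a k B :: real
  assumes "a \<ge> 0" "k > 0" "(k * a)^2 \<le> 4 * k * B"
  shows "a \<le> 2 * sqrt (B / k)"
proof -
  have "a^2 \<le> 4 * (B / k)" using assms(2,3) by (simp add: power_mult_distrib field_simps power2_eq_square)
  then have "a \<le> sqrt (4 * (B / k))" by (rule real_le_rsqrt)
  also have "sqrt (4 * (B / k)) = 2 * sqrt (B / k)" unfolding real_sqrt_mult by simp
  finally show ?thesis .
qed

lemma sqrt_bound_conv: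
  fixes a k B :: real
  assumes "a \<ge> 0" "k > 0" "a \<le> 2 * sqrt (B / k)"
  shows "(k * a)^2 \<le> 4 * k * B"
proof -
  have "sqrt (B / k) \<ge> 0" using assms(1,3) by linarith
  then have Bk: "B / k \<ge> 0" by simp
  have "a^2 \<le> (2 * sqrt (B / k))^2" using assms(1,3) by (intro power_mono) auto
  also have "\<dots> = 4 * (B / k)" using Bk by (simp add: power_mult_distrib)
  finally have "a^2 \<le> 4 * (B / k)" .
  then have "k * a^2 \<le> k * (4 * (B / k))" using assms(2) by (intro mult_left_mono) auto
  then have "k * a^2 \<le> 4 * B" using assms(2) by simp
  then have "k * (k * a^2) \<le> k * (4 * B)" using assms(2) by (intro mult_left_mono) auto
  then show ?thesis by (simp add: power_mult_distrib power2_eq_square mult_ac)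
qed

lemma P2:
  fixes s :: real
  assumes "s \<ge> 0" "s^2 \<ge> 5"
  shows "(1 + s)^2 \<le> 4 * 2 * (s^2 - 1 - 2)"
proof -
  have s2: "s \<ge> 2"
  proof (rule ccontr)
    assume "\<not> s \<ge> 2"
    then have "s^2 \<le> 2^2" using assms(1) by (intro power_mono) auto
    then show False using assms(2) by simp
  qed
  have h: "s * s \<ge> 2 * s" using s2 assms(1) by (intro mult_right_mono) auto
  have e1: "(1 + s)^2 = s * s + 2 * s + 1" by (simp add: power2_eq_square algebra_simps)
  have e2: "4 * 2 * (s^2 - 1 - 2) = 8 * (s * s) - 24" by (simp add: power2_eq_square algebra_simps)
  have "s * s \<ge> 5" using assms(2) by (simp add: power2_eq_square)
  then show ?thesis unfolding e1 e2 using h by linarith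
qed

lemma P3:
  fixes s :: real
  assumes "s \<ge> 3"
  shows "(1 + (3 - 1) * s)^2 \<le> 4 * 3 * (s^2 - 1 - 3)"
proof -
  have h: "s * s \<ge> 3 * s" using assms by (intro mult_right_mono) auto
  have e1: "(1 + (3 - 1) * s)^2 = 4 * (s * s) + 4 * s + 1" by (simp add: power2_eq_square algebra_simps)
  have e2: "4 * 3 * (s^2 - 1 - 3) = 12 * (s * s) - 48" by (simp add: power2_eq_square algebra_simps)
  show ?thesis unfolding e1 e2 using h assms by linarith
qed

lemma P4:
  fixes s :: real
  assumes "s \<ge> 4"
  shows "(1 + (4 - 1) * s)^2 \<le> 4 * 4 * (s^2 - 1 - 4)"
proof -
  have h: "s * s \<ge> 4 * s" using assms by (intro mult_right_mono) auto
  have e1: "(1 + (4 - 1) * s)^2 = 9 * (s * s) + 6 * s + 1" by (simp add: power2_eq_square algebra_simps)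
  have e2: "4 * 4 * (s^2 - 1 - 4) = 16 * (s * s) - 80" by (simp add: power2_eq_square algebra_simps)
  show ?thesis unfolding e1 e2 using h assms by linarith
qed

lemma P5:
  fixes s :: real
  assumes "s \<ge> 7"
  shows "(1 + (5 - 1) * s)^2 \<le> 4 * 5 * (s^2 - 1 - 5)"
proof -
  have h: "s * s \<ge> 7 * s" using assms by (intro mult_right_mono) auto
  have e1: "(1 + (5 - 1) * s)^2 = 16 * (s * s) + 8 * s + 1" by (simp add: power2_eq_square algebra_simps)
  have e2: "4 * 5 * (s^2 - 1 - 5) = 20 * (s * s) - 120" by (simp add: power2_eq_square algebra_simps)
  show ?thesis unfolding e1 e2 using h assms by linarith
qed

lemma Pbar:
  fixes k M :: real
  assumes "k \<ge> 3" "M \<ge> 3"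
  shows "((k - 1) * (1 + M))^2 \<le> 4 * k * ((k - 1) * (M^2 - 1) - k)"
proof -
  have e: "4 * k * ((k - 1) * (M^2 - 1) - k) - ((k - 1) * (1 + M))^2
     = (k - 1) * (M + 1) * (k * (3 * M - 5) + M + 1) - 4 * k^2"
    by (simp add: power2_eq_square algebra_simps)
  have a: "k - 1 \<ge> 0" "M + 1 \<ge> 4" using assms by auto
  have c: "k * (3 * M - 5) + M + 1 \<ge> 4 * k + 4"
  proof -
    have "k * (3 * M - 5) \<ge> k * 4" using assms by (intro mult_left_mono) auto
    then show ?thesis using assms by linarith
  qed
  have "(k - 1) * (M + 1) \<ge> (k - 1) * 4" using a by (intro mult_left_mono) auto
  then have "(k - 1) * (M + 1) * (k * (3 * M - 5) + M + 1) \<ge> (k - 1) * 4 * (4 * k + 4)"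
    using c a assms by (intro mult_mono) auto
  moreover have "(k - 1) * 4 * (4 * k + 4) = 16 * k^2 - 16" by (simp add: power2_eq_square algebra_simps)
  moreover have "k^2 \<ge> 9" using power_mono[of 3 k 2] assms(1) by simp
  ultimately show ?thesis using e by linarith
qed

lemma Pbig:
  fixes k M :: real
  assumes "k \<ge> 6" "M \<ge> 1"
  shows "((k - 1) * M - 1)^2 > 4 * k * (M^2 - 1 - k)"
proof -
  have c: "(k - 1)^2 - 4 * k \<ge> 1"
  proof -
    have "(k - 1)^2 - 4 * k - 1 = (k - 6) * k" by (simp add: power2_eq_square algebra_simps)
    moreover have "(k - 6) * k \<ge> 0" using assms(1) by simp
    ultimately show ?thesis by linarith
  qed
  have h: "((k - 1)^2 - 4 * k) * M^2 - M^2 \<ge> 0"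
  proof -
    have "((k - 1)^2 - 4 * k) * M^2 \<ge> 1 * M^2" using c by (intro mult_right_mono) auto
    then show ?thesis by simp
  qed
  have e: "((k - 1) * M - 1)^2 - 4 * k * (M^2 - 1 - k)
    = (((k - 1)^2 - 4 * k) * M^2 - M^2) + (M - k + 1)^2 + (3 * k^2 + 6 * k)"
    by (simp add: power2_eq_square algebra_simps)
  have "k^2 \<ge> 0" by simp
  then have "3 * k^2 + 6 * k > 0" using assms(1) by linarith
  moreover have "(M - k + 1)^2 \<ge> 0" by simp
  ultimately show ?thesis using e h by linarith
qed



context ff
begin

lemma lam_bound2:
  assumes k: "k > 0" "k dvd p^m - 1" and b: "b \<noteq> 0"
  shows "k * norm (1 + lam (kth_powers k) b) \<le> (k - 1) * (1 + sqrt (p ^ m))"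
proof -
  have "of_nat k * (1 + lam (kth_powers k) b) = of_nat k + (\<Sum>j<k. cnj (fj k j b) * G (fj k j))"
    using decomp[OF k b] by (simp add: distrib_left)
  also have "(\<Sum>j<k. cnj (fj k j b) * G (fj k j))
      = cnj (fj k 0 b) * G (fj k 0) + (\<Sum>j\<in>{1..<k}. cnj (fj k j b) * G (fj k j))"
    using k(1) by (simp add: lessThan_atLeast0 sum.atLeast_Suc_lessThan)
  also have "cnj (fj k 0 b) * G (fj k 0) = - 1" using G_f0 by (simp add: fj_def)
  finally have e: "of_nat k * (1 + lam (kth_powers k) b)
      = of_nat (k - 1) + (\<Sum>j\<in>{1..<k}. cnj (fj k j b) * G (fj k j))"
    using k(1) by (simp add: of_nat_diff)
  have "k * norm (1 + lam (kth_powers k) b) = norm (of_nat k * (1 + lam (kth_powers k) b))"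
    by (simp add: norm_mult)
  also have "\<dots> \<le> norm (of_nat (k - 1) :: complex) + norm (\<Sum>j\<in>{1..<k}. cnj (fj k j b) * G (fj k j))"
    unfolding e by (rule norm_triangle_ineq)
  also have "norm (\<Sum>j\<in>{1..<k}. cnj (fj k j b) * G (fj k j)) \<le> (\<Sum>j\<in>{1..<k}. norm (cnj (fj k j b) * G (fj k j)))"
    by (rule norm_sum)
  also have "\<dots> = (\<Sum>j\<in>{1..<k}. sqrt (p ^ m))"
    by (intro sum.cong refl) (auto simp: norm_mult G_fj_norm[OF k])
  finally have "k * norm (1 + lam (kth_powers k) b) \<le> real (k - 1) + (\<Sum>j\<in>{1..<k}. sqrt (p ^ m))"
    by (simp only: norm_of_nat)
  then show ?thesis using k(1) by (simp add: algebra_simps of_nat_diff)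
qed

lemma ram_intro:
  fixes S :: "'a set"
  assumes conn: "connected_graph (\<lambda>u w. w - u \<in> S)"
    and bnd: "\<And>b. b \<noteq> 0 \<Longrightarrow> cmod (lam S b) \<noteq> real (card S) \<Longrightarrow> cmod (lam S b) \<le> 2 * sqrt (real (card S) - 1)"
  shows "ramanujan (\<lambda>u w. w - u \<in> S)"
  unfolding ramanujan_def
proof (intro conjI exI[of _ "card S"] allI impI)
  show "connected_graph (\<lambda>u w. w - u \<in> S)" by (rule conn)
  show "regular_graph (\<lambda>u w. w - u \<in> S) (card S)" by (rule cayley_regular)
  fix mu assume a: "adj_eigenvalue (\<lambda>u w. w - u \<in> S) mu \<and> cmod mu \<noteq> real (card S)"
  then obtain b where b: "mu = lam S b" using cayley_eig_is_lam by blast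
  show "cmod mu \<le> 2 * sqrt (real (card S) - 1)"
  proof (cases "b = 0")
    case True then show ?thesis using a b by (simp add: lam_0)
  next
    case False then show ?thesis using a b bnd by simp
  qed
qed

lemma ram_elim:
  fixes S :: "'a set"
  assumes "ramanujan (\<lambda>u w. w - u \<in> S)" "cmod (lam S b) \<noteq> real (card S)"
  shows "cmod (lam S b) \<le> 2 * sqrt (real (card S) - 1)"
proof -
  obtain N where N: "regular_graph (\<lambda>u w. w - u \<in> S) N"
    and ev: "\<And>mu. adj_eigenvalue (\<lambda>u w. w - u \<in> S) mu \<and> cmod mu \<noteq> real N \<Longrightarrow> cmod mu \<le> 2 * sqrt (real N - 1)"
    using assms(1) unfolding ramanujan_def by blast
  have "N = card S" using N cayley_regular[of S] by (simp add: regular_graph_def)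
  then show ?thesis using ev[of "lam S b"] cayley_lam_is_eig[of S b] assms(2) by simp
qed

end


context ff
begin

lemma R_sub: "kth_powers k \<subseteq> (UNIV - {0::'a})" by (auto simp: kth_powers_def)

lemma card_Sb: "card (UNIV - {0::'a} - kth_powers k) = (p^m - 1) - card (kth_powers k :: 'a set)"
proof -
  have "card (UNIV - {0::'a} - kth_powers k) = card (UNIV - {0::'a}) - card (kth_powers k :: 'a set)"
    using R_sub by (intro card_Diff_subset) auto
  then show ?thesis using card_q by simp
qed

lemma real_cardR:
  assumes "k > 0" "k dvd p^m - 1"
  shows "real (card (kth_powers k :: 'a set)) = (real (p^m) - 1) / k"
  using card_R[OF assms] assms q_ge2 by (simp add: real_of_nat_div of_nat_diff)

lemma sq_sqrt_q: "(sqrt (real (p^m)))^2 = real (p^m)" by simp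

lemma gamma_ram_bound:
  assumes k: "k > 0" "k dvd p^m - 1" and b: "b \<noteq> 0"
    and P: "(1 + (real k - 1) * sqrt (p^m))^2 \<le> 4 * k * ((sqrt (p^m))^2 - 1 - k)"
  shows "cmod (lam (kth_powers k) b) \<le> 2 * sqrt (real (card (kth_powers k :: 'a set)) - 1)"
proof -
  define a where "a = cmod (lam (kth_powers k) b)"
  have a0: "a \<ge> 0" by (simp add: a_def)
  have ka: "k * a \<le> 1 + (real k - 1) * sqrt (p^m)" using lam_bound[OF k b] by (simp add: a_def)
  have "(k * a)^2 \<le> (1 + (real k - 1) * sqrt (p^m))^2" using ka a0 by (intro power_mono) auto
  also have "\<dots> \<le> 4 * k * (real (p^m) - 1 - k)" using P by simp
  finally have "a \<le> 2 * sqrt ((real (p^m) - 1 - k) / k)" using a0 k(1) by (intro sqrt_bound) auto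
  also have "(real (p^m) - 1 - k) / k = real (card (kth_powers k :: 'a set)) - 1"
    using real_cardR[OF k] k(1) by (simp add: field_simps)
  finally show ?thesis by (simp add: a_def)
qed

lemma gammabar_ram_bound:
  assumes k: "k > 0" "k dvd p^m - 1" and b: "b \<noteq> 0"
    and P: "((real k - 1) * (1 + sqrt (p^m)))^2 \<le> 4 * k * ((real k - 1) * ((sqrt (p^m))^2 - 1) - k)"
  shows "cmod (lam (UNIV - {0} - kth_powers k) b) \<le> 2 * sqrt (real (card (UNIV - {0::'a} - kth_powers k)) - 1)"
proof -
  define a where "a = cmod (lam (UNIV - {0} - kth_powers k) b)"
  have a0: "a \<ge> 0" by (simp add: a_def)
  have e: "lam (UNIV - {0} - kth_powers k) b = - 1 - lam (kth_powers k) b"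
    using lam_compl[OF b R_sub] by simp
  have "cmod (- 1 - z) = cmod (1 + z)" for z :: complex
    using norm_minus_cancel[of "1 + z"] by (simp add: algebra_simps)
  then have aeq: "a = cmod (1 + lam (kth_powers k) b)" by (simp add: a_def e)
  have ka: "k * a \<le> (real k - 1) * (1 + sqrt (p^m))"
    using lam_bound2[OF k b] k(1) by (simp add: aeq of_nat_diff)
  have "(k * a)^2 \<le> ((real k - 1) * (1 + sqrt (p^m)))^2" using ka a0 by (intro power_mono) auto
  also have "\<dots> \<le> 4 * k * ((real k - 1) * (real (p^m) - 1) - k)" using P by simp
  finally have "a \<le> 2 * sqrt (((real k - 1) * (real (p^m) - 1) - k) / k)" using a0 k(1) by (intro sqrt_bound) auto
  also have "((real k - 1) * (real (p^m) - 1) - k) / k = real (card (UNIV - {0::'a} - kth_powers k)) - 1"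
  proof -
    have "card (kth_powers k :: 'a set) \<le> card (UNIV - {0::'a})" using R_sub by (intro card_mono) auto
    then have le: "card (kth_powers k :: 'a set) \<le> p^m - 1" using card_q by simp
    have "real (card (UNIV - {0::'a} - kth_powers k)) = (real (p^m) - 1) - (real (p^m) - 1) / k"
      using card_Sb real_cardR[OF k] le q_ge2 by (simp add: of_nat_diff)
    then show ?thesis using k(1) by (simp add: field_simps)
  qed
  finally show ?thesis by (simp add: a_def)
qed

lemma gammabar_conn:
  assumes k: "k > 1" "k dvd p^m - 1"
  shows "connected_graph (\<lambda>u w. w - u \<in> UNIV - {0::'a} - kth_powers k)"
proof (rule connected_big)
  have kp: "k > 0" using k by simp
  have "card (kth_powers k :: 'a set) = (p^m - 1) div k" using card_R[OF kp k(2)] .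
  also have "\<dots> \<le> (p^m - 1) div 2" using k by (intro div_le_mono2) auto
  finally have cR: "card (kth_powers k :: 'a set) \<le> (p^m - 1) div 2" .
  have "card (insert 0 (UNIV - {0::'a} - kth_powers k)) = card (UNIV - {0::'a} - kth_powers k) + 1"
    by simp
  also have "\<dots> = (p^m - 1) - card (kth_powers k :: 'a set) + 1" using card_Sb by simp
  finally show "2 * card (insert 0 (UNIV - {0::'a} - kth_powers k)) > p ^ m"
    using cR q_ge2 by linarith
qed

end


context ff
begin

lemma caseA:
  assumes k: "k = 2" "p^m mod 4 = 1" "k dvd p^m - 1"
  shows "ramanujan (\<lambda>u w. w - u \<in> (kth_powers k :: 'a set))"
    and "ramanujan (\<lambda>u w. w - u \<in> UNIV - {0::'a} - kth_powers k)"
proof -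
  have kp: "k > 0" using k by simp
  have q5: "p^m \<ge> 5" using q_ge2 k(2) by presburger
  define s where "s = sqrt (real (p^m))"
  have s0: "s \<ge> 0" by (simp add: s_def)
  have "real (p^m) \<ge> 5" using q5 by linarith
  then have s2: "s^2 \<ge> 5" by (simp add: s_def)
  have P: "(1 + s)^2 \<le> 4 * 2 * (s^2 - 1 - 2)" by (rule P2[OF s0 s2])
  show "ramanujan (\<lambda>u w. w - u \<in> (kth_powers k :: 'a set))"
  proof (rule ram_intro)
    show "connected_graph (\<lambda>u w. w - u \<in> (kth_powers k :: 'a set))"
    proof -
      have "connected_graph (gpaley k :: 'a \<Rightarrow> 'a \<Rightarrow> bool)"
      proof (rule connected_R[OF kp k(3)])
        define a where "a = (p^m - 1) div k + 1"
        have a3: "a \<ge> 3" using q5 k(1) by (simp add: a_def)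
        have a2: "2 * a \<ge> p^m" using k(1) by (simp add: a_def)
        have "a * a \<ge> 3 * a" using a3 by simp
        then show "\<not> ((p^m - 1) div k + 1) * ((p^m - 1) div k + 1) \<le> p ^ m"
          using a2 a3 unfolding a_def[symmetric] by linarith
      qed
      moreover have "(gpaley k :: 'a \<Rightarrow> 'a \<Rightarrow> bool) = (\<lambda>u w. w - u \<in> kth_powers k)"
        by (intro ext) (simp add: gpaley_def)
      ultimately show ?thesis by simp
    qed
    fix b :: 'a assume b: "b \<noteq> 0"
    show "cmod (lam (kth_powers k) b) \<le> 2 * sqrt (real (card (kth_powers k :: 'a set)) - 1)"
      by (rule gamma_ram_bound[OF kp k(3) b]) (use P k(1) in \<open>simp add: s_def\<close>)
  qed
  show "ramanujan (\<lambda>u w. w - u \<in> UNIV - {0::'a} - kth_powers k)"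
  proof (rule ram_intro)
    show "connected_graph (\<lambda>u w. w - u \<in> UNIV - {0::'a} - kth_powers k)"
      using gammabar_conn k by simp
    fix b :: 'a assume b: "b \<noteq> 0"
    show "cmod (lam (UNIV - {0} - kth_powers k) b) \<le> 2 * sqrt (real (card (UNIV - {0::'a} - kth_powers k)) - 1)"
      by (rule gammabar_ram_bound[OF kp k(3) b]) (use P k(1) in \<open>simp add: s_def\<close>)
  qed
qed

end


context ff
begin

lemma caseB:
  assumes k: "k > 2" "k dvd p^m - 1" and m: "even m"
    and t: "t > 0" "t dvd m div 2" "k dvd p^t + 1" and kne: "k \<noteq> p^(m div 2) + 1"
  shows "ramanujan (\<lambda>u w. w - u \<in> UNIV - {0::'a} - kth_powers k)"
    and "ramanujan (\<lambda>u w. w - u \<in> (kth_powers k :: 'a set)) \<longleftrightarrow> k \<le> 5"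
proof -
  have kp: "k > 0" using k by simp
  define M where "M = p^(m div 2)"
  have qM: "p^m = M * M" using m by (simp add: M_def power_add[symmetric] flip: mult_2)
  have s: "real p ^ m = (real M)^2" using qM by (metis of_nat_mult of_nat_power power2_eq_square)
  have mh: "m div 2 > 0" using m m_pos by (auto elim!: evenE)
  have kM: "k \<le> M" using nt_k_le[OF prime_p t(1,2) mh t(3) kne] by (simp add: M_def)
  have M3: "M \<ge> 3" using kM k by simp
  show "ramanujan (\<lambda>u w. w - u \<in> UNIV - {0::'a} - kth_powers k)"
  proof (rule ram_intro)
    show "connected_graph (\<lambda>u w. w - u \<in> UNIV - {0::'a} - kth_powers k)"
      using gammabar_conn k by simp
    fix b :: 'a assume b: "b \<noteq> 0"
    have P: "((real k - 1) * (1 + real M))^2 \<le> 4 * k * ((real k - 1) * ((real M)^2 - 1) - k)"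
      using Pbar[of "real k" "real M"] k M3 by simp
    show "cmod (lam (UNIV - {0} - kth_powers k) b) \<le> 2 * sqrt (real (card (UNIV - {0::'a} - kth_powers k)) - 1)"
      by (rule gammabar_ram_bound[OF kp k(2) b]) (use P in \<open>simp add: s\<close>)
  qed
  have conn: "connected_graph (\<lambda>u w. w - u \<in> (kth_powers k :: 'a set))"
  proof -
    have "connected_graph (gpaley k :: 'a \<Rightarrow> 'a \<Rightarrow> bool)"
    proof (rule connected_R[OF kp k(2)])
      define a where "a = (p^m - 1) div k"
      have ak: "a * k = M * M - 1" using k(2) qM by (simp add: a_def)
      have "a \<ge> M"
      proof (rule ccontr)
        assume "\<not> a \<ge> M"
        then have "a \<le> M - 1" by simp
        then have "a * k \<le> (M - 1) * k" by (rule mult_right_mono) simp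
        also have "\<dots> \<le> (M - 1) * M" using kM by (rule mult_left_mono) simp
        also have "\<dots> = M * M - M" by (simp add: algebra_simps)
        finally have "a * k \<le> M * M - M" .
        moreover have "M \<le> M * M" using M3 by simp
        ultimately show False using ak M3 by arith
      qed
      then have "(M + 1) * (M + 1) \<le> (a + 1) * (a + 1)" by (intro mult_mono) auto
      moreover have "M * M < (M + 1) * (M + 1)" by simp
      ultimately have gt: "p^m < (a + 1) * (a + 1)" using qM by linarith
      show "\<not> ((p^m - 1) div k + 1) * ((p^m - 1) div k + 1) \<le> p ^ m"
        using gt unfolding a_def by linarith
    qed
    moreover have "(gpaley k :: 'a \<Rightarrow> 'a \<Rightarrow> bool) = (\<lambda>u w. w - u \<in> kth_powers k)"
      by (intro ext) (simp add: gpaley_def)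
    ultimately show ?thesis by simp
  qed
  have cardR: "real (card (kth_powers k :: 'a set)) = (real M * real M - 1) / k"
    using real_cardR[OF kp k(2)] qM by simp
  show "ramanujan (\<lambda>u w. w - u \<in> (kth_powers k :: 'a set)) \<longleftrightarrow> k \<le> 5"
  proof
    assume k5: "k \<le> 5"
    have P: "(1 + (real k - 1) * real M)^2 \<le> 4 * k * ((real M)^2 - 1 - k)"
    proof -
      have "k = 3 \<or> k = 4 \<or> k = 5" using k5 k(1) by linarith
      moreover have "k = 5 \<Longrightarrow> M \<ge> 7"
      proof -
        assume k5': "k = 5"
        have "(k = 5 \<and> p = 2 \<and> m \<ge> 8 \<and> 4 dvd m) \<or>
              (k = 5 \<and> p \<noteq> 2 \<and> (p mod 5 = 2 \<or> p mod 5 = 3) \<and> m \<ge> 4 \<and> 4 dvd m) \<or>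
              (k = 5 \<and> p mod 5 = 4 \<and> m \<ge> 2)"
          using nt_conds[OF prime_p m_pos m t(1,2) k(1) t(3) kne] k5' by auto
        moreover have p2: "p \<ge> 2" using p_ge2 .
        ultimately consider "p = 2" "m \<ge> 8" | "p \<ge> 3" "m \<ge> 4" | "p \<ge> 9" "m \<ge> 2"
        proof -
          assume c1: "p = 2 \<Longrightarrow> 8 \<le> m \<Longrightarrow> thesis" and c2: "3 \<le> p \<Longrightarrow> 4 \<le> m \<Longrightarrow> thesis"
            and c3: "9 \<le> p \<Longrightarrow> 2 \<le> m \<Longrightarrow> thesis"
          assume h: "(k = 5 \<and> p = 2 \<and> m \<ge> 8 \<and> 4 dvd m) \<or>
              (k = 5 \<and> p \<noteq> 2 \<and> (p mod 5 = 2 \<or> p mod 5 = 3) \<and> m \<ge> 4 \<and> 4 dvd m) \<or>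
              (k = 5 \<and> p mod 5 = 4 \<and> m \<ge> 2)"
          show thesis
          proof -
            { assume "p mod 5 = 4" "m \<ge> 2"
              have "p \<noteq> 4"
              proof
                assume "p = 4"
                then have "(2::nat) dvd p" by simp
                then have "2 = p" using primes_dvd_imp_eq[OF two_is_prime_nat prime_p] by blast
                then show False using \<open>p = 4\<close> by simp
              qed
              then have "p \<ge> 9" using \<open>p mod 5 = 4\<close> by presburger
              then have thesis using c3 \<open>m \<ge> 2\<close> by blast }
            note c3' = this
            from h show thesis
            proof (elim disjE)
              assume "k = 5 \<and> p = 2 \<and> m \<ge> 8 \<and> 4 dvd m" then show thesis using c1 by blast
            next
              assume a: "k = 5 \<and> p \<noteq> 2 \<and> (p mod 5 = 2 \<or> p mod 5 = 3) \<and> m \<ge> 4 \<and> 4 dvd m"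
              then have "p \<ge> 3" using p2 by linarith
              then show thesis using c2 a by blast
            next
              assume "k = 5 \<and> p mod 5 = 4 \<and> m \<ge> 2" then show thesis using c3' by blast
            qed
          qed
        qed
        then show "M \<ge> 7"
        proof cases
          case 1
          have "2^4 \<le> (2::nat)^(m div 2)" using 1 by (intro power_increasing) auto
          then show ?thesis using 1 by (simp add: M_def)
        next
          case 2
          have "3^2 \<le> p^2" using 2 by (intro power_mono) auto
          also have "p^2 \<le> p^(m div 2)" using 2 p2 by (intro power_increasing) auto
          finally show ?thesis by (simp add: M_def)
        next
          case 3
          have "p^1 \<le> p^(m div 2)" using 3 by (intro power_increasing) auto
          then show ?thesis using 3 by (simp add: M_def)
        qed
      qed
      ultimately show ?thesis
        using P3[of "real M"] P4[of "real M"] P5[of "real M"] kM by auto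
    qed
    show "ramanujan (\<lambda>u w. w - u \<in> (kth_powers k :: 'a set))"
    proof (rule ram_intro[OF conn])
      fix b :: 'a assume b: "b \<noteq> 0"
      show "cmod (lam (kth_powers k) b) \<le> 2 * sqrt (real (card (kth_powers k :: 'a set)) - 1)"
        by (rule gamma_ram_bound[OF kp k(2) b]) (use P in \<open>simp add: s\<close>)
    qed
  next
    assume ram: "ramanujan (\<lambda>u w. w - u \<in> (kth_powers k :: 'a set))"
    show "k \<le> 5"
    proof (rule ccontr)
      assume "\<not> k \<le> 5"
      then have k6: "k \<ge> 6" by simp
      obtain d0 J where dJ: "d0 > 0" "J \<ge> 1" "2 * (m div 2) = d0 * 2^J" "k dvd p^d0 + 1"
        using nt_chain[OF t(1,2) mh t(3)] by blast
      have mJ: "m = d0 * 2^J" using dJ(3) m by simp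
      interpret S: semi p m g k d0 J
        by unfold_locales (use kp dJ mJ in auto)
      have MJ: "p^(d0 * 2^(J-1)) = M"
      proof -
        have e: "d0 * 2^J = 2 * (d0 * 2^(J-1))" using dJ(2) by (cases J) auto
        have "m div 2 = d0 * 2^(J-1)" using mJ e by simp
        then show ?thesis by (simp add: M_def)
      qed
      obtain b where b: "b \<noteq> 0" and bv: "of_nat k * lam (kth_powers k) b = - 1 + of_nat (k - 1) * of_nat M
          \<or> of_nat k * lam (kth_powers k) b = - 1 - of_nat (k - 1) * of_nat M"
        using S.big_eig unfolding MJ by blast
      define a where "a = cmod (lam (kth_powers k) b)"
      have a0: "a \<ge> 0" by (simp add: a_def)
      have ka: "k * a = cmod (of_nat k * lam (kth_powers k) b)" by (simp add: a_def norm_mult)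
      have km1: "real (k - 1) = real k - 1" using kp by (simp add: of_nat_diff)
      have kM1: "(real k - 1) * real M \<ge> 1" using k6 M3
      proof -
        have "(real k - 1) * real M \<ge> 5 * 3" using k6 M3 by (intro mult_mono) auto
        then show ?thesis by simp
      qed
      have bounds: "(real k - 1) * real M - 1 \<le> k * a \<and> k * a \<le> (real k - 1) * real M + 1"
      proof (cases "of_nat k * lam (kth_powers k) b = - 1 + of_nat (k - 1) * of_nat M")
        case True
        have eq: "of_nat k * lam (kth_powers k) b = complex_of_real ((real k - 1) * real M - 1)"
          using True km1 by simp
        have "k * a = cmod (complex_of_real ((real k - 1) * real M - 1))" using ka unfolding eq .
        then have "k * a = \<bar>(real k - 1) * real M - 1\<bar>" by (simp only: norm_of_real)
        then show ?thesis using kM1 by simp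
      next
        case False
        then have "of_nat k * lam (kth_powers k) b = - 1 - of_nat (k - 1) * of_nat M" using bv by blast
        then have eq: "of_nat k * lam (kth_powers k) b = complex_of_real (- ((real k - 1) * real M + 1))"
          using km1 by simp
        have "k * a = cmod (complex_of_real (- ((real k - 1) * real M + 1)))" using ka unfolding eq .
        then have "k * a = \<bar>(real k - 1) * real M + 1\<bar>" by (simp only: norm_of_real abs_minus)
        then show ?thesis using kM1 by simp
      qed
      have ne: "a \<noteq> real (card (kth_powers k :: 'a set))"
      proof
        assume "a = real (card (kth_powers k :: 'a set))"
        then have "k * a = real M * real M - 1" using cardR kp by simp
        moreover have "(real k - 1) * real M \<le> (real M - 1) * real M" using kM by (intro mult_right_mono) auto
        moreover have "(real M - 1) * real M = real M * real M - real M" by (simp add: algebra_simps)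
        moreover have "real M \<ge> 3" using M3 by simp
        ultimately show False using bounds by linarith
      qed
      have "a \<le> 2 * sqrt (real (card (kth_powers k :: 'a set)) - 1)"
        using ram_elim[OF ram] ne by (simp add: a_def)
      also have "real (card (kth_powers k :: 'a set)) - 1 = (real M ^ 2 - 1 - k) / k"
        using cardR kp by (simp add: field_simps power2_eq_square)
      finally have "(real k * a)^2 \<le> 4 * real k * (real M ^ 2 - 1 - real k)" using a0 kp by (intro sqrt_bound_conv) auto
      moreover have "((real k - 1) * real M - 1)^2 \<le> (real k * a)^2"
        using bounds kM1 by (intro power_mono) auto
      moreover have "((real k - 1) * real M - 1)^2 > 4 * real k * (real M ^ 2 - 1 - real k)"
        using Pbig[of "real k" "real M"] k6 M3 by simp
      ultimately show False by linarith
    qed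
  qed
qed

end


theorem theorem4p1:
  fixes p m k :: nat
  assumes "prime p" and "m > 0" and "card (UNIV :: 'a::{finite,field} set) = p ^ m"
    and "k dvd p ^ m - 1"
    and "semiprimitive_pair k p m"
  shows "(ramanujan (gpaley k :: 'a \<Rightarrow> 'a \<Rightarrow> bool) \<longleftrightarrow>
           k = 2 \<or>
           (even m \<and>
             ((k = 3 \<and> p = 2 \<and> m \<ge> 4) \<or>
              (k = 3 \<and> p \<noteq> 2 \<and> p mod 3 = 2 \<and> m \<ge> 2) \<or>
              (k = 4 \<and> p = 3 \<and> m \<ge> 4) \<or>
              (k = 4 \<and> p \<noteq> 3 \<and> p mod 4 = 3 \<and> m \<ge> 2) \<or>
              (k = 5 \<and> p = 2 \<and> m \<ge> 8 \<and> 4 dvd m) \<or>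
              (k = 5 \<and> p \<noteq> 2 \<and> (p mod 5 = 2 \<or> p mod 5 = 3) \<and> m \<ge> 4 \<and> 4 dvd m) \<or>
              (k = 5 \<and> p mod 5 = 4 \<and> m \<ge> 2))))
         \<and> ramanujan (gpaley_bar k :: 'a \<Rightarrow> 'a \<Rightarrow> bool)"
proof -
  obtain g :: 'a where g: "g \<noteq> 0" "\<forall>x. x \<noteq> 0 \<longrightarrow> (\<exists>i. x = g ^ i)"
    using exists_generator by blast
  interpret F: ff p m g using assms(1,2,3) g by unfold_locales auto
  have gp: "(gpaley k :: 'a \<Rightarrow> 'a \<Rightarrow> bool) = (\<lambda>u w. w - u \<in> kth_powers k)"
    by (intro ext) (simp add: gpaley_def)
  have gpb: "(gpaley_bar k :: 'a \<Rightarrow> 'a \<Rightarrow> bool) = (\<lambda>u w. w - u \<in> UNIV - {0::'a} - kth_powers k)"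
    by (intro ext) (simp add: gpaley_bar_def)
  from assms(5) consider (A) "k = 2" "p ^ m mod 4 = 1"
    | (B) "k > 2" "even m" "\<exists>t. t > 0 \<and> t dvd (m div 2) \<and> k dvd p ^ t + 1" "k \<noteq> p ^ (m div 2) + 1"
    unfolding semiprimitive_pair_def by blast
  then show ?thesis
  proof cases
    case A
    show ?thesis using F.caseA[OF A assms(4)] A(1) unfolding gp gpb by simp
  next
    case B
    obtain t where t: "t > 0" "t dvd m div 2" "k dvd p ^ t + 1" using B(3) by blast
    have r1: "ramanujan (\<lambda>u w. w - u \<in> (kth_powers k :: 'a set)) \<longleftrightarrow> k \<le> 5"
      by (rule F.caseB(2)[OF B(1) assms(4) B(2) t B(4)])
    have r2: "ramanujan (\<lambda>u w. w - u \<in> UNIV - {0::'a} - kth_powers k)"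
      by (rule F.caseB(1)[OF B(1) assms(4) B(2) t B(4)])
    have nt: "(k \<le> 5) \<longleftrightarrow>
           ((k = 3 \<and> p = 2 \<and> m \<ge> 4) \<or>
              (k = 3 \<and> p \<noteq> 2 \<and> p mod 3 = 2 \<and> m \<ge> 2) \<or>
              (k = 4 \<and> p = 3 \<and> m \<ge> 4) \<or>
              (k = 4 \<and> p \<noteq> 3 \<and> p mod 4 = 3 \<and> m \<ge> 2) \<or>
              (k = 5 \<and> p = 2 \<and> m \<ge> 8 \<and> 4 dvd m) \<or>
              (k = 5 \<and> p \<noteq> 2 \<and> (p mod 5 = 2 \<or> p mod 5 = 3) \<and> m \<ge> 4 \<and> 4 dvd m) \<or>
              (k = 5 \<and> p mod 5 = 4 \<and> m \<ge> 2))"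
      by (rule nt_conds[OF assms(1,2) B(2) t(1,2) B(1) t(3) B(4)])
    show ?thesis unfolding gp gpb using r1 r2 nt B(1,2) by auto
  qed
qed



end
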